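(* Let $(M,F)$ be a conic pseudo-Riemannian surface and $\overline F=e^\phi F$ an anisotropic conformal change such that $\phi_{;2}$ is horizontally constant. Then $\overline F$ is Landsberg if and only if either $\overline F$ satisfies the $T$-condition ($\overline{\mathcal I}_{;2}=0$) or $\phi_{;2}\phi_{,1}=\phi_{,2}$.
   Context: Throughout, $M$ is a smooth $2$-dimensional manifold, $TM_0$ its slit tangent bundle with induced local coordinates $(x^i,y^i)$, $\partial_i=\partial/\partial x^i$, $\dot\partial_i=\partial/\partial y^i$. A function is called $h(r)$ if it is positively homogeneous of degree $r$ in $y$. A conic pseudo-Finsler surface $(M,F)$ consists of a conic subbundle $\mathcal A\subset TM_0$ (an open set invariant under $y\mapsto\lambda y$, $\lambda>0$, projecting onto $M$) and a smooth $h(1)$ function $F:\mathcal A\to\mathbb R$ such that $g_{ij}=\frac12\dot\partial_i\dot\partial_jF^2$ is nondegenerate. Put $\ell_i=\dot\partial_iF$, $\ell^i=y^i/F$. Modified Berwald frame: $\varepsilon\in\{1,-1\}$ and a covector $m_i$ satisfy $g_{ij}=\ell_i\ell_j+\varepsilon m_im_j$, $m^i=g^{ij}m_j$, so $\ell^i\ell_i=1$, $\ell^im_i=0$, $m^im_i=\varepsilon$. The main scalar $\mathcal I$ ($h(0)$) is defined by $FC_{ijk}=\mathcal I\,m_im_jm_k$, where $C_{ijk}=\frac14\dot\partial_i\dot\partial_j\dot\partial_kF^2$. The geodesic spray of $F$ is $S=y^i\partial_i-2G^i\dot\partial_i$; $G^i_j=\dot\partial_jG^i$, $\delta_i=\partial_i-G^j_i\dot\partial_j$.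 For a smooth function $f$: $f_{;1}=y^i\dot\partial_if$, $f_{;2}=\varepsilon Fm^i\dot\partial_if$, $f_{,1}=\ell^i\delta_if$, $f_{,2}=\varepsilon m^i\delta_if$; iterated derivatives are read left to right. $f$ is horizontally constant if $\delta_if=0$ (i.e. $f_{,1}=f_{,2}=0$). $F$ is (conic pseudo-)Riemannian if $F^2$ is quadratic in $y$, equivalently $\mathcal I\equiv0$. Anisotropic conformal change: $\phi$ is a smooth $h(0)$ function on $\mathcal A$ with $F^2(\dot\partial_i\dot\partial_j\phi+\dot\partial_i\phi\,\dot\partial_j\phi)m^im^j+\varepsilon\ne0$, and $\overline F=e^{\phi}F$. Set $\sigma=\phi_{;2;2}+\varepsilon\mathcal I\phi_{;2}+2(\phi_{;2})^2$, $\rho=1/(\sigma+\varepsilon-(\phi_{;2})^2)$ (with $\varepsilon\rho>0$), $2Q=\varepsilon\rho F^2(\phi_{;2}\phi_{,1}+\phi_{,1;2}-2\phi_{,2})$, $2P=-\rho F^2\phi_{;2}(\phi_{;2}\phi_{,1}+\phi_{,1;2}-2\phi_{,2})+F^2\phi_{,1}$. The spray coefficients of $\overline F$ are $\overline G^i=G^i+Qm^i+P\ell^i$, $\overline S=y^i\partial_i-2\overline G^i\dot\partial_i$, and the main scalar of $\overline F$ is $\overline{\mathcal I}=\sqrt{\varepsilon\rho}[\mathcal I+2\varepsilon\phi_{;2}-\frac\varepsilon2(\ln\rho)_{;2}]$; $\overline{\mathcal I}_{;2}$ is taken with respect to $F$. $\overline F$ is Landsberg iff $\overline S(\overline{\mathcal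 I})=0$; satisfies the $T$-condition iff $\overline{\mathcal I}_{;2}=0$. *)

theory Defs
  imports "HOL-Analysis.Analysis"
begin

text \<open>A point of the slit tangent bundle over a coordinate
chart of the surface M is a pair (x,y) with x, y in R^2 (induced coordinates
(x^i,y^i)).\<close>

type_synonym pt = "(real^2) \<times> (real^2)"

definition pdx :: "2 \<Rightarrow> (pt \<Rightarrow> real) \<Rightarrow> pt \<Rightarrow> real" where
  "pdx i f p = deriv (\<lambda>t. f (p + (t *\<^sub>R axis i 1, 0))) 0"

definition pdy :: "2 \<Rightarrow> (pt \<Rightarrow> real) \<Rightarrow> pt \<Rightarrow> real" where
  "pdy i f p = deriv (\<lambda>t. f (p + (0, t *\<^sub>R axis i 1))) 0"

fun iterd :: "(bool \<times> 2) list \<Rightarrow> (pt \<Rightarrow> real) \<Rightarrow> pt \<Rightarrow> real" where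
  "iterd [] f = f"
| "iterd ((b,i) # os) f = (if b then pdy i else pdx i) (iterd os f)"

definition fsmooth_on :: "pt set \<Rightarrow> (pt \<Rightarrow> real) \<Rightarrow> bool" where
  "fsmooth_on A f \<longleftrightarrow> (\<forall>os. iterd os f differentiable_on A)"

definition conic_set :: "pt set \<Rightarrow> bool" where
  "conic_set A \<longleftrightarrow> open A \<and> A \<noteq> {} \<and> (\<forall>p\<in>A. snd p \<noteq> 0) \<and>
     (\<forall>x y (c::real). (x,y) \<in> A \<longrightarrow> c > 0 \<longrightarrow> (x, c *\<^sub>R y) \<in> A)"

definition homog :: "real \<Rightarrow> pt set \<Rightarrow> (pt \<Rightarrow> real) \<Rightarrow> bool" where
  "homog r A f \<longleftrightarrow> (\<forall>x y (c::real). (x,y) \<in> A \<longrightarrow> c > 0 \<longrightarrow>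
       f (x, c *\<^sub>R y) = c powr r * f (x,y))"

definition Fsq :: "(pt \<Rightarrow> real) \<Rightarrow> pt \<Rightarrow> real" where
  "Fsq F = (\<lambda>q. (F q)\<^sup>2)"

definition gmet :: "(pt \<Rightarrow> real) \<Rightarrow> 2 \<Rightarrow> 2 \<Rightarrow> pt \<Rightarrow> real" where
  "gmet F i j p = 1/2 * pdy i (pdy j (Fsq F)) p"

definition gmat :: "(pt \<Rightarrow> real) \<Rightarrow> pt \<Rightarrow> real^2^2" where
  "gmat F p = (\<chi> i j. gmet F i j p)"

definition ginv :: "(pt \<Rightarrow> real) \<Rightarrow> 2 \<Rightarrow> 2 \<Rightarrow> pt \<Rightarrow> real" where
  "ginv F i j p = matrix_inv (gmat F p) $ i $ j"

definition ell_lo :: "(pt \<Rightarrow> real) \<Rightarrow> 2 \<Rightarrow> pt \<Rightarrow> real" where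
  "ell_lo F i p = pdy i F p"

definition ell_up :: "(pt \<Rightarrow> real) \<Rightarrow> 2 \<Rightarrow> pt \<Rightarrow> real" where
  "ell_up F i p = snd p $ i / F p"

definition m_up :: "(pt \<Rightarrow> real) \<Rightarrow> (2 \<Rightarrow> pt \<Rightarrow> real) \<Rightarrow> 2 \<Rightarrow> pt \<Rightarrow> real" where
  "m_up F m i p = (\<Sum>j\<in>UNIV. ginv F i j p * m j p)"

definition cartan :: "(pt \<Rightarrow> real) \<Rightarrow> 2 \<Rightarrow> 2 \<Rightarrow> 2 \<Rightarrow> pt \<Rightarrow> real" where
  "cartan F i j k p = 1/4 * pdy i (pdy j (pdy k (Fsq F))) p"

definition main_scalar :: "(pt \<Rightarrow> real) \<Rightarrow> (2 \<Rightarrow> pt \<Rightarrow> real) \<Rightarrow> pt \<Rightarrow> real" where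
  "main_scalar F m p = (THE c. \<forall>i j k. F p * cartan F i j k p = c * m i p * m j p * m k p)"

definition spray :: "(pt \<Rightarrow> real) \<Rightarrow> 2 \<Rightarrow> pt \<Rightarrow> real" where
  "spray F i p = 1/4 * (\<Sum>l\<in>UNIV. ginv F i l p *
      ((\<Sum>k\<in>UNIV. snd p $ k * pdx k (pdy l (Fsq F)) p) - pdx l (Fsq F) p))"

definition nlconn :: "(pt \<Rightarrow> real) \<Rightarrow> 2 \<Rightarrow> 2 \<Rightarrow> pt \<Rightarrow> real" where
  "nlconn F j i p = pdy i (spray F j) p"

definition hdelta :: "(pt \<Rightarrow> real) \<Rightarrow> 2 \<Rightarrow> (pt \<Rightarrow> real) \<Rightarrow> pt \<Rightarrow> real" where
  "hdelta F i f p = pdx i f p - (\<Sum>j\<in>UNIV. nlconn F j i p * pdy j f p)"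

text \<open>Berwald-frame derivatives f_{;1}, f_{;2}, f_{,1}, f_{,2}.\<close>
definition vd1 :: "(pt \<Rightarrow> real) \<Rightarrow> pt \<Rightarrow> real" where
  "vd1 f p = (\<Sum>i\<in>UNIV. snd p $ i * pdy i f p)"

definition vd2 :: "(pt \<Rightarrow> real) \<Rightarrow> real \<Rightarrow> (2 \<Rightarrow> pt \<Rightarrow> real) \<Rightarrow> (pt \<Rightarrow> real) \<Rightarrow> pt \<Rightarrow> real" where
  "vd2 F eps m f p = eps * F p * (\<Sum>i\<in>UNIV. m_up F m i p * pdy i f p)"

definition hd1 :: "(pt \<Rightarrow> real) \<Rightarrow> (pt \<Rightarrow> real) \<Rightarrow> pt \<Rightarrow> real" where
  "hd1 F f p = (\<Sum>i\<in>UNIV. ell_up F i p * hdelta F i f p)"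

definition hd2 :: "(pt \<Rightarrow> real) \<Rightarrow> real \<Rightarrow> (2 \<Rightarrow> pt \<Rightarrow> real) \<Rightarrow> (pt \<Rightarrow> real) \<Rightarrow> pt \<Rightarrow> real" where
  "hd2 F eps m f p = eps * (\<Sum>i\<in>UNIV. m_up F m i p * hdelta F i f p)"

definition berwald_frame :: "pt set \<Rightarrow> (pt \<Rightarrow> real) \<Rightarrow> real \<Rightarrow> (2 \<Rightarrow> pt \<Rightarrow> real) \<Rightarrow> bool" where
  "berwald_frame A F eps m \<longleftrightarrow> (eps = 1 \<or> eps = -1) \<and> (\<forall>i. fsmooth_on A (m i)) \<and>
     (\<forall>p\<in>A. \<forall>i j. gmet F i j p = ell_lo F i p * ell_lo F j p + eps * m i p * m j p)"

definition pseudo_finsler :: "pt set \<Rightarrow> (pt \<Rightarrow> real) \<Rightarrow> bool" where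
  "pseudo_finsler A F \<longleftrightarrow> conic_set A \<and> fsmooth_on A F \<and> homog 1 A F \<and>
     (\<forall>p\<in>A. F p \<noteq> 0) \<and> (\<forall>p\<in>A. det (gmat F p) \<noteq> 0)"

definition pseudo_riemannian :: "pt set \<Rightarrow> (pt \<Rightarrow> real) \<Rightarrow> bool" where
  "pseudo_riemannian A F \<longleftrightarrow> pseudo_finsler A F \<and>
     (\<exists>a :: real^2 \<Rightarrow> real^2^2. \<forall>x y. (x,y) \<in> A \<longrightarrow>
        (F (x,y))\<^sup>2 = (\<Sum>i\<in>UNIV. \<Sum>j\<in>UNIV. a x $ i $ j * y $ i * y $ j))"

text \<open>Quantities of the anisotropic conformal change Fbar = e^phi F.\<close>
definition cc_sigma where
  "cc_sigma F eps m phi p = vd2 F eps m (vd2 F eps m phi) p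
     + eps * main_scalar F m p * vd2 F eps m phi p + 2 * (vd2 F eps m phi p)\<^sup>2"

definition cc_rho where
  "cc_rho F eps m phi p = 1 / (cc_sigma F eps m phi p + eps - (vd2 F eps m phi p)\<^sup>2)"

definition cc_Q where
  "cc_Q F eps m phi p = 1/2 * (eps * cc_rho F eps m phi p * (F p)\<^sup>2 *
     (vd2 F eps m phi p * hd1 F phi p + vd2 F eps m (hd1 F phi) p - 2 * hd2 F eps m phi p))"

definition cc_P where
  "cc_P F eps m phi p = 1/2 * (- cc_rho F eps m phi p * (F p)\<^sup>2 * vd2 F eps m phi p *
     (vd2 F eps m phi p * hd1 F phi p + vd2 F eps m (hd1 F phi) p - 2 * hd2 F eps m phi p)
     + (F p)\<^sup>2 * hd1 F phi p)"

definition cc_spray where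
  "cc_spray F eps m phi i p = spray F i p + cc_Q F eps m phi p * m_up F m i p
     + cc_P F eps m phi p * ell_up F i p"

definition cc_S where
  "cc_S F eps m phi f p = (\<Sum>i\<in>UNIV. snd p $ i * pdx i f p)
     - 2 * (\<Sum>i\<in>UNIV. cc_spray F eps m phi i p * pdy i f p)"

text \<open>Main scalar of Fbar; (ln rho)_{;2} is read as (ln |rho|)_{;2} = rho_{;2}/rho.\<close>
definition cc_Ibar where
  "cc_Ibar F eps m phi p = sqrt (eps * cc_rho F eps m phi p) *
     (main_scalar F m p + 2 * eps * vd2 F eps m phi p
      - eps / 2 * vd2 F eps m (\<lambda>q. ln \<bar>cc_rho F eps m phi q\<bar>) p)"

definition conf_factor where
  "conf_factor A F eps m phi \<longleftrightarrow> fsmooth_on A phi \<and> homog 0 A phi \<and>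
     (\<forall>p\<in>A. (F p)\<^sup>2 * (\<Sum>i\<in>UNIV. \<Sum>j\<in>UNIV.
        (pdy i (pdy j phi) p + pdy i phi p * pdy j phi p) * m_up F m i p * m_up F m j p) + eps \<noteq> 0) \<and>
     (\<forall>p\<in>A. eps * cc_rho F eps m phi p > 0)"

definition horiz_const :: "pt set \<Rightarrow> (pt \<Rightarrow> real) \<Rightarrow> (pt \<Rightarrow> real) \<Rightarrow> bool" where
  "horiz_const A F f \<longleftrightarrow> (\<forall>p\<in>A. \<forall>i. hdelta F i f p = 0)"

definition landsberg_cc where
  "landsberg_cc A F eps m phi \<longleftrightarrow> (\<forall>p\<in>A. cc_S F eps m phi (cc_Ibar F eps m phi) p = 0)"

end

theory Submission
  imports Defs
begin

definition ddir :: "'a::real_normed_vector \<Rightarrow> ('a \<Rightarrow> real) \<Rightarrow> 'a \<Rightarrow> real" where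
  "ddir v f p = deriv (\<lambda>t. f (p + t *\<^sub>R v)) 0"

lemma ddir_hasderiv:
  assumes "(f has_derivative f') (at p)"
  shows "((\<lambda>t. f (p + t *\<^sub>R v)) has_real_derivative f' v) (at 0)"
proof -
  have l: "((\<lambda>t. p + t *\<^sub>R v) has_derivative (\<lambda>t. t *\<^sub>R v)) (at 0)"
    by (auto intro!: derivative_eq_intros)
  have "((\<lambda>t. f (p + t *\<^sub>R v)) has_derivative (\<lambda>t. f' (t *\<^sub>R v))) (at 0)"
    using has_derivative_compose[OF l] assms by simp
  moreover have "(\<lambda>t. f' (t *\<^sub>R v)) = (*) (f' v)"
    using has_derivative_bounded_linear[OF assms]
    by (auto simp: fun_eq_iff linear_simps bounded_linear.linear)
  ultimately show ?thesis by (simp add: has_field_derivative_def)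
qed

lemma ddir_eq:
  assumes "(f has_derivative f') (at p)"
  shows "ddir v f p = f' v"
  unfolding ddir_def using ddir_hasderiv[OF assms] by (rule DERIV_imp_deriv)

lemma ddir_DERIV:
  assumes "f differentiable (at p)"
  shows "((\<lambda>t. f (p + t *\<^sub>R v)) has_real_derivative ddir v f p) (at 0)"
  using assms ddir_hasderiv ddir_eq unfolding differentiable_def by metis

lemma ddir_local:
  assumes "open S" "p \<in> S" "\<And>q. q \<in> S \<Longrightarrow> f q = g q"
  shows "ddir v f p = ddir v g p"
proof -
  obtain r where r: "r > 0" "ball p r \<subseteq> S" using assms(1,2) openE by blast
  have "eventually (\<lambda>t. p + t *\<^sub>R v \<in> S) (nhds 0)"
    unfolding eventually_nhds_metric
  proof (intro exI[of _ "r / (norm v + 1)"] conjI allI impI)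
    have "norm v + 1 > 0" by (simp add: add_nonneg_pos)
    then show "0 < r / (norm v + 1)" using r by simp
    fix t :: real assume "dist t 0 < r / (norm v + 1)"
    moreover have "norm v + 1 > 0" by (simp add: add_nonneg_pos)
    ultimately have "\<bar>t\<bar> * (norm v + 1) < r" by (simp add: pos_less_divide_eq)
    moreover have "\<bar>t\<bar> * norm v \<le> \<bar>t\<bar> * (norm v + 1)" by (simp add: mult_left_mono)
    ultimately have "dist p (p + t *\<^sub>R v) < r" by (simp add: dist_norm)
    then show "p + t *\<^sub>R v \<in> S" using r by auto
  qed
  then have "eventually (\<lambda>t. f (p + t *\<^sub>R v) = g (p + t *\<^sub>R v)) (nhds 0)"
    by eventually_elim (use assms in auto)
  then show ?thesis unfolding ddir_def by (rule deriv_cong_ev) simp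
qed

lemma pdx_ddir: "pdx i f p = ddir (axis i 1, 0) f p"
  by (simp add: pdx_def ddir_def)

lemma pdy_ddir: "pdy i f p = ddir (0, axis i 1) f p"
  by (simp add: pdy_def ddir_def)

lemma line_hasderiv:
  assumes "(f has_derivative f') (at (a + x *\<^sub>R v))"
  shows "((\<lambda>t. f (a + t *\<^sub>R v)) has_real_derivative f' v) (at x)"
proof -
  have l: "((\<lambda>t. a + t *\<^sub>R v) has_derivative (\<lambda>t. t *\<^sub>R v)) (at x)"
    by (auto intro!: derivative_eq_intros)
  have "((\<lambda>t. f (a + t *\<^sub>R v)) has_derivative (\<lambda>t. f' (t *\<^sub>R v))) (at x)"
    using has_derivative_compose[OF l assms] by simp
  moreover have "(\<lambda>t. f' (t *\<^sub>R v)) = (*) (f' v)"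
    using has_derivative_bounded_linear[OF assms]
    by (auto simp: fun_eq_iff linear_simps bounded_linear.linear)
  ultimately show ?thesis by (simp add: has_field_derivative_def)
qed

lemma dist_p_plus: "dist p (p + x) = norm (x::'a::real_normed_vector)"
  by (simp add: dist_norm)

lemma mvt_between:
  fixes \<phi> \<phi>' :: "real \<Rightarrow> real"
  assumes "a \<noteq> b" "\<And>x. min a b \<le> x \<Longrightarrow> x \<le> max a b \<Longrightarrow> (\<phi> has_real_derivative \<phi>' x) (at x)"
  shows "\<exists>\<xi>. min a b \<le> \<xi> \<and> \<xi> \<le> max a b \<and> \<phi> b - \<phi> a = (b - a) * \<phi>' \<xi>"
proof (cases "a < b")
  case True
  then obtain z where "a < z" "z < b" "\<phi> b - \<phi> a = (b - a) * \<phi>' z"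
    using MVT2[of a b \<phi> \<phi>'] assms by (auto simp: min_def max_def)
  then show ?thesis using True by (intro exI[of _ z]) (auto simp: min_def max_def)
next
  case False
  then have "b < a" using assms(1) by auto
  then obtain z where "b < z" "z < a" "\<phi> a - \<phi> b = (a - b) * \<phi>' z"
    using MVT2[of b a \<phi> \<phi>'] assms by (auto simp: min_def max_def)
  then show ?thesis using \<open>b < a\<close> by (intro exI[of _ z]) (auto simp: algebra_simps min_def max_def)
qed

lemma clairaut_lim:
  fixes f :: "'a::real_normed_vector \<Rightarrow> real"
  assumes S: "open S" "p \<in> S"
    and fd: "\<And>q. q \<in> S \<Longrightarrow> (f has_derivative f' q) (at q)"
    and dv: "((\<lambda>q. f' q v) has_derivative Dv) (at p)"
  shows "((\<lambda>h. (f (p + h *\<^sub>R v + h *\<^sub>R w) - f (p + h *\<^sub>R v) - f (p + h *\<^sub>R w) + f p) / h^2)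
           \<longlongrightarrow> Dv w) (at 0)"
proof -
  obtain \<rho> where \<rho>: "\<rho> > 0" "ball p \<rho> \<subseteq> S" using S openE by blast
  have bl: "bounded_linear Dv" using dv by (rule has_derivative_bounded_linear)
  define K where "K = norm v + norm w"
  have K0: "K \<ge> 0" by (simp add: K_def)
  show ?thesis
    unfolding LIM_eq
  proof (intro allI impI)
    fix r :: real assume r: "r > 0"
    define \<epsilon> where "\<epsilon> = r / (2*K + 1)"
    have \<epsilon>pos: "\<epsilon> > 0" using r K0 by (simp add: \<epsilon>_def)
    have \<epsilon>K: "2 * \<epsilon> * K < r"
    proof -
      have "2 * \<epsilon> * K = r * (2*K) / (2*K+1)" using K0 by (simp add: \<epsilon>_def)
      also have "\<dots> < r" using r K0 by (simp add: divide_less_eq)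
      finally show ?thesis .
    qed
    obtain \<delta> where \<delta>: "\<delta> > 0"
      "\<And>y. norm (y - p) < \<delta> \<Longrightarrow> norm (f' y v - f' p v - Dv (y - p)) \<le> \<epsilon> * norm (y - p)"
      using dv \<epsilon>pos unfolding has_derivative_at_alt by blast
    define s where "s = min \<delta> \<rho> / (K + 1)"
    have spos: "s > 0" using \<delta> \<rho> K0 by (simp add: s_def)
    show "\<exists>s>0. \<forall>x. x \<noteq> 0 \<and> norm (x - 0) < s \<longrightarrow>
       norm ((f (p + x *\<^sub>R v + x *\<^sub>R w) - f (p + x *\<^sub>R v) - f (p + x *\<^sub>R w) + f p) / x\<^sup>2 - Dv w) < r"
    proof (intro exI[of _ s] conjI allI impI spos)
      fix h :: real assume h: "h \<noteq> 0 \<and> norm (h - 0) < s"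
      have hK: "\<bar>h\<bar> * (K + 1) < min \<delta> \<rho>" using h K0 by (simp add: s_def pos_less_divide_eq)
      have hK2: "\<bar>h\<bar> * K < min \<delta> \<rho>"
        using hK by (smt (verit, best) mult_left_mono abs_ge_zero)
      have nb: "norm (\<xi> *\<^sub>R v + h *\<^sub>R w) \<le> \<bar>h\<bar> * K" "norm (\<xi> *\<^sub>R v) \<le> \<bar>h\<bar> * K"
        if "\<bar>\<xi>\<bar> \<le> \<bar>h\<bar>" for \<xi>
      proof -
        have "norm (\<xi> *\<^sub>R v + h *\<^sub>R w) \<le> \<bar>\<xi>\<bar> * norm v + \<bar>h\<bar> * norm w"
          by (metis norm_scaleR norm_triangle_ineq)
        also have "\<dots> \<le> \<bar>h\<bar> * norm v + \<bar>h\<bar> * norm w" using that by (simp add: mult_right_mono)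
        finally show "norm (\<xi> *\<^sub>R v + h *\<^sub>R w) \<le> \<bar>h\<bar> * K" by (simp add: K_def algebra_simps)
        have "norm (\<xi> *\<^sub>R v) \<le> \<bar>h\<bar> * norm v" using that by (simp add: mult_right_mono)
        also have "\<dots> \<le> \<bar>h\<bar> * K" by (simp add: K_def mult_left_mono)
        finally show "norm (\<xi> *\<^sub>R v) \<le> \<bar>h\<bar> * K" .
      qed
      have inS: "p + \<xi> *\<^sub>R v + h *\<^sub>R w \<in> S" "p + \<xi> *\<^sub>R v \<in> S" if "\<bar>\<xi>\<bar> \<le> \<bar>h\<bar>" for \<xi>
      proof -
        have "dist p (p + \<xi> *\<^sub>R v + h *\<^sub>R w) < \<rho>"
          using nb(1)[OF that] hK2 dist_p_plus[of p "\<xi> *\<^sub>R v + h *\<^sub>R w"] by (simp add: add.assoc)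
        then show "p + \<xi> *\<^sub>R v + h *\<^sub>R w \<in> S" using \<rho> by auto
        have "dist p (p + \<xi> *\<^sub>R v) < \<rho>"
          using nb(2)[OF that] hK2 by (simp add: dist_norm)
        then show "p + \<xi> *\<^sub>R v \<in> S" using \<rho> by auto
      qed
      define \<phi> where "\<phi> \<xi> = f (p + h *\<^sub>R w + \<xi> *\<^sub>R v) - f (p + \<xi> *\<^sub>R v)" for \<xi>
      define \<phi>' where "\<phi>' \<xi> = f' (p + h *\<^sub>R w + \<xi> *\<^sub>R v) v - f' (p + \<xi> *\<^sub>R v) v" for \<xi>
      have der: "(\<phi> has_real_derivative \<phi>' x) (at x)" if "min 0 h \<le> x" "x \<le> max 0 h" for x
      proof -
        have ax: "\<bar>x\<bar> \<le> \<bar>h\<bar>" using that by (auto simp: min_def max_def split: if_splits)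
        have 1: "((\<lambda>t. f (p + h *\<^sub>R w + t *\<^sub>R v)) has_real_derivative f' (p + h *\<^sub>R w + x *\<^sub>R v) v) (at x)"
          by (rule line_hasderiv, rule fd) (use inS(1)[OF ax] in \<open>simp add: algebra_simps\<close>)
        have 2: "((\<lambda>t. f (p + t *\<^sub>R v)) has_real_derivative f' (p + x *\<^sub>R v) v) (at x)"
          by (rule line_hasderiv, rule fd) (use inS(2)[OF ax] in simp)
        show ?thesis unfolding \<phi>_def \<phi>'_def by (intro DERIV_diff 1 2)
      qed
      obtain \<xi> where \<xi>: "min 0 h \<le> \<xi>" "\<xi> \<le> max 0 h" "\<phi> h - \<phi> 0 = (h - 0) * \<phi>' \<xi>"
        using mvt_between[of 0 h \<phi> \<phi>'] der h by blast
      have a\<xi>: "\<bar>\<xi>\<bar> \<le> \<bar>h\<bar>" using \<xi> by (auto simp: min_def max_def split: if_splits)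
      define q1 where "q1 = p + h *\<^sub>R w + \<xi> *\<^sub>R v"
      define q2 where "q2 = p + \<xi> *\<^sub>R v"
      have n1: "norm (q1 - p) \<le> \<bar>h\<bar> * K" using nb(1)[OF a\<xi>] by (simp add: q1_def algebra_simps)
      have n2: "norm (q2 - p) \<le> \<bar>h\<bar> * K" using nb(2)[OF a\<xi>] by (simp add: q2_def)
      have e1: "norm (f' q1 v - f' p v - Dv (q1 - p)) \<le> \<epsilon> * norm (q1 - p)"
        using \<delta>(2) n1 hK2 by simp
      have e2: "norm (f' q2 v - f' p v - Dv (q2 - p)) \<le> \<epsilon> * norm (q2 - p)"
        using \<delta>(2) n2 hK2 by simp
      have lin: "Dv (q1 - p) - Dv (q2 - p) = h * Dv w"
      proof -
        interpret Dvl: bounded_linear Dv by (rule bl)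
        show ?thesis by (simp add: q1_def q2_def Dvl.add Dvl.scaleR)
      qed
      have Deq: "f (p + h *\<^sub>R v + h *\<^sub>R w) - f (p + h *\<^sub>R v) - f (p + h *\<^sub>R w) + f p = h * \<phi>' \<xi>"
        using \<xi>(3) by (simp add: \<phi>_def algebra_simps)
      have "\<phi>' \<xi> - h * Dv w = (f' q1 v - f' p v - Dv (q1 - p)) - (f' q2 v - f' p v - Dv (q2 - p))"
        using lin by (simp add: \<phi>'_def q1_def q2_def algebra_simps)
      then have "\<bar>\<phi>' \<xi> - h * Dv w\<bar> \<le> \<epsilon> * norm (q1 - p) + \<epsilon> * norm (q2 - p)"
        using e1 e2 by simp
      also have "\<dots> \<le> \<epsilon> * (\<bar>h\<bar> * K) + \<epsilon> * (\<bar>h\<bar> * K)"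
        using n1 n2 \<epsilon>pos by (intro add_mono mult_left_mono) auto
      finally have bd: "\<bar>\<phi>' \<xi> - h * Dv w\<bar> \<le> \<bar>h\<bar> * (2 * \<epsilon> * K)" by (simp add: algebra_simps)
      have "(h * \<phi>' \<xi>) / h\<^sup>2 - Dv w = (\<phi>' \<xi> - h * Dv w) / h"
        using h by (simp add: power2_eq_square field_simps)
      then have "norm ((f (p + h *\<^sub>R v + h *\<^sub>R w) - f (p + h *\<^sub>R v) - f (p + h *\<^sub>R w) + f p) / h\<^sup>2 - Dv w)
          = \<bar>\<phi>' \<xi> - h * Dv w\<bar> / \<bar>h\<bar>" using Deq by simp
      also have "\<dots> \<le> 2 * \<epsilon> * K" using bd h by (simp add: divide_le_eq mult.commute)
      also have "\<dots> < r" by (rule \<epsilon>K)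
      finally show "norm ((f (p + h *\<^sub>R v + h *\<^sub>R w) - f (p + h *\<^sub>R v) - f (p + h *\<^sub>R w) + f p) / h\<^sup>2 - Dv w) < r" .
    qed
  qed
qed

lemma clairaut:
  fixes f :: "'a::real_normed_vector \<Rightarrow> real"
  assumes S: "open S" "p \<in> S"
    and fd: "\<And>q. q \<in> S \<Longrightarrow> (f has_derivative f' q) (at q)"
    and dv: "((\<lambda>q. f' q v) has_derivative Dv) (at p)"
    and dw: "((\<lambda>q. f' q w) has_derivative Dw) (at p)"
  shows "Dv w = Dw v"
proof -
  have 1: "((\<lambda>h. (f (p + h *\<^sub>R v + h *\<^sub>R w) - f (p + h *\<^sub>R v) - f (p + h *\<^sub>R w) + f p) / h^2)
           \<longlongrightarrow> Dv w) (at 0)" by (rule clairaut_lim[OF S fd dv])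
  have 2: "((\<lambda>h. (f (p + h *\<^sub>R w + h *\<^sub>R v) - f (p + h *\<^sub>R w) - f (p + h *\<^sub>R v) + f p) / h^2)
           \<longlongrightarrow> Dw v) (at 0)" by (rule clairaut_lim[OF S fd dw])
  have "(\<lambda>h. (f (p + h *\<^sub>R w + h *\<^sub>R v) - f (p + h *\<^sub>R w) - f (p + h *\<^sub>R v) + f p) / h^2)
      = (\<lambda>h. (f (p + h *\<^sub>R v + h *\<^sub>R w) - f (p + h *\<^sub>R v) - f (p + h *\<^sub>R w) + f p) / h^2)"
    by (simp add: algebra_simps)
  with 2 have "((\<lambda>h. (f (p + h *\<^sub>R v + h *\<^sub>R w) - f (p + h *\<^sub>R v) - f (p + h *\<^sub>R w) + f p) / h^2)
           \<longlongrightarrow> Dw v) (at 0)" by simp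
  from tendsto_unique[OF _ 1 this] show ?thesis by simp
qed

lemma ddir_from_DERIV:
  "((\<lambda>t. H (p + t *\<^sub>R v)) has_real_derivative D) (at 0) \<Longrightarrow> ddir v H p = D"
  unfolding ddir_def by (rule DERIV_imp_deriv)

lemma ddir_add:
  assumes "f differentiable (at p)" "g differentiable (at p)"
  shows "ddir v (\<lambda>q. f q + g q) p = ddir v f p + ddir v g p"
  by (rule ddir_from_DERIV) (use DERIV_add[OF ddir_DERIV[OF assms(1)] ddir_DERIV[OF assms(2)]] in simp)

lemma ddir_diff:
  assumes "f differentiable (at p)" "g differentiable (at p)"
  shows "ddir v (\<lambda>q. f q - g q) p = ddir v f p - ddir v g p"
  by (rule ddir_from_DERIV) (use DERIV_diff[OF ddir_DERIV[OF assms(1)] ddir_DERIV[OF assms(2)]] in simp)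

lemma ddir_mult:
  assumes "f differentiable (at p)" "g differentiable (at p)"
  shows "ddir v (\<lambda>q. f q * g q) p = ddir v f p * g p + f p * ddir v g p"
  by (rule ddir_from_DERIV) (use DERIV_mult[OF ddir_DERIV[OF assms(1)] ddir_DERIV[OF assms(2)]] in \<open>simp add: mult.commute\<close>)

lemma ddir_const: "ddir v (\<lambda>q. c) p = 0"
  by (rule ddir_from_DERIV) simp

lemma ddir_cmult:
  assumes "f differentiable (at p)"
  shows "ddir v (\<lambda>q. c * f q) p = c * ddir v f p"
  by (rule ddir_from_DERIV) (use DERIV_cmult[OF ddir_DERIV[OF assms(1)]] in simp)

lemma ddir_inverse:
  assumes "f differentiable (at p)" "f p \<noteq> 0"
  shows "ddir v (\<lambda>q. 1 / f q) p = - ddir v f p / (f p)^2"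
proof (rule ddir_from_DERIV)
  have d: "((\<lambda>t. f (p + t *\<^sub>R v)) has_real_derivative ddir v f p) (at 0)"
    by (rule ddir_DERIV[OF assms(1)])
  have nz: "(\<lambda>t. f (p + t *\<^sub>R v)) 0 \<noteq> 0" using assms(2) by simp
  have "((\<lambda>t. inverse (f (p + t *\<^sub>R v))) has_real_derivative
      - (inverse ((\<lambda>t. f (p + t *\<^sub>R v)) 0) * ddir v f p * inverse ((\<lambda>t. f (p + t *\<^sub>R v)) 0))) (at 0)"
    by (rule DERIV_inverse'[OF d nz])
  moreover have "(\<lambda>t. inverse (f (p + t *\<^sub>R v))) = (\<lambda>t. 1 / f (p + t *\<^sub>R v))"
    by (simp add: inverse_eq_divide)
  moreover have "- (inverse ((\<lambda>t. f (p + t *\<^sub>R v)) 0) * ddir v f p * inverse ((\<lambda>t. f (p + t *\<^sub>R v)) 0))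
      = - ddir v f p / (f p)^2"
    by (simp add: inverse_eq_divide power2_eq_square)
  ultimately show "((\<lambda>t. 1 / f (p + t *\<^sub>R v)) has_real_derivative - ddir v f p / (f p)\<^sup>2) (at 0)"
    by simp
qed

lemma DERIV_ln_abs_real:
  assumes "x \<noteq> (0::real)"
  shows "((\<lambda>y. ln \<bar>y\<bar>) has_real_derivative 1 / x) (at x)"
proof (cases "x > 0")
  case True
  have "(ln has_real_derivative 1 / x) (at x)" using DERIV_ln_divide[OF True] .
  then show ?thesis
    by (rule has_field_derivative_transform_within_open[where S = "{0<..}"]) (use True in auto)
next
  case False
  then have x: "x < 0" using assms by auto
  have "((\<lambda>y. ln (- y)) has_real_derivative (1 / (- x)) * (- 1)) (at x)"
    using DERIV_chain2[OF DERIV_ln_divide[of "-x"] DERIV_minus[OF DERIV_ident]] x by simp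
  then have "((\<lambda>y. ln (- y)) has_real_derivative 1 / x) (at x)" by simp
  then show ?thesis
    by (rule has_field_derivative_transform_within_open[where S = "{..<0}"]) (use x in auto)
qed

lemma ddir_ln_abs:
  assumes "f differentiable (at p)" "f p \<noteq> 0"
  shows "ddir v (\<lambda>q. ln \<bar>f q\<bar>) p = ddir v f p / f p"
proof (rule ddir_from_DERIV)
  have d: "((\<lambda>t. f (p + t *\<^sub>R v)) has_real_derivative ddir v f p) (at 0)"
    by (rule ddir_DERIV[OF assms(1)])
  have l: "((\<lambda>y. ln \<bar>y\<bar>) has_real_derivative 1 / f p) (at ((\<lambda>t. f (p + t *\<^sub>R v)) 0))"
    using DERIV_ln_abs_real[OF assms(2)] by simp
  have "((\<lambda>t. ln \<bar>f (p + t *\<^sub>R v)\<bar>) has_real_derivative 1 / f p * ddir v f p) (at 0)"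
    using DERIV_chain2[OF l d] by simp
  then show "((\<lambda>t. ln \<bar>f (p + t *\<^sub>R v)\<bar>) has_real_derivative ddir v f p / f p) (at 0)" by simp
qed

lemma ddir_snd: "ddir (a, b) (\<lambda>q::pt. snd q $ i) p = b $ i"
proof (rule ddir_from_DERIV)
  have "((\<lambda>t. snd p $ i + t * b $ i) has_real_derivative b $ i) (at 0)"
    by (auto intro!: derivative_eq_intros)
  then show "((\<lambda>t. snd (p + t *\<^sub>R (a, b)) $ i) has_real_derivative b $ i) (at 0)" by simp
qed

lemma ddir_linear_dir:
  assumes "f differentiable (at p)"
  shows "ddir (v + w) f p = ddir v f p + ddir w f p" "ddir (c *\<^sub>R v) f p = c * ddir v f p"
proof -
  obtain f' where f': "(f has_derivative f') (at p)" using assms unfolding differentiable_def by blast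
  interpret bounded_linear f' using has_derivative_bounded_linear[OF f'] .
  show "ddir (v + w) f p = ddir v f p + ddir w f p" "ddir (c *\<^sub>R v) f p = c * ddir v f p"
    using ddir_eq[OF f'] by (simp_all add: add scaleR)
qed

lemma ddir_chain3:
  fixes \<Phi> :: "real \<times> real \<times> real \<Rightarrow> real"
  assumes "f differentiable (at p)" "g differentiable (at p)" "k differentiable (at p)"
    and "(\<Phi> has_derivative \<Phi>') (at (f p, g p, k p))"
  shows "ddir v (\<lambda>q. \<Phi> (f q, g q, k q)) p = \<Phi>' (ddir v f p, ddir v g p, ddir v k p)"
    and "(\<lambda>q. \<Phi> (f q, g q, k q)) differentiable (at p)"
proof -
  obtain f' where f': "(f has_derivative f') (at p)" using assms unfolding differentiable_def by blast
  obtain g' where g': "(g has_derivative g') (at p)" using assms unfolding differentiable_def by blast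
  obtain k' where k': "(k has_derivative k') (at p)" using assms unfolding differentiable_def by blast
  have T: "((\<lambda>q. (f q, g q, k q)) has_derivative (\<lambda>q. (f' q, g' q, k' q))) (at p)"
    by (intro has_derivative_Pair f' g' k')
  have C: "((\<lambda>q. \<Phi> (f q, g q, k q)) has_derivative (\<lambda>q. \<Phi>' (f' q, g' q, k' q))) (at p)"
    by (rule has_derivative_compose[OF T assms(4)])
  show "ddir v (\<lambda>q. \<Phi> (f q, g q, k q)) p = \<Phi>' (ddir v f p, ddir v g p, ddir v k p)"
    using ddir_eq[OF C] ddir_eq[OF f'] ddir_eq[OF g'] ddir_eq[OF k'] by simp
  show "(\<lambda>q. \<Phi> (f q, g q, k q)) differentiable (at p)" using C unfolding differentiable_def by blast
qed

lemma ddir_comm: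
  fixes f :: "'a::real_normed_vector \<Rightarrow> real"
  assumes S: "open S" "p \<in> S" and fd: "\<And>q. q \<in> S \<Longrightarrow> f differentiable (at q)"
    and dv: "(\<lambda>q. ddir v f q) differentiable (at p)"
    and dw: "(\<lambda>q. ddir w f q) differentiable (at p)"
  shows "ddir w (\<lambda>q. ddir v f q) p = ddir v (\<lambda>q. ddir w f q) p"
proof -
  define f' where "f' q = frechet_derivative f (at q)" for q
  have fd': "(f has_derivative f' q) (at q)" if "q \<in> S" for q
    using fd[OF that] unfolding f'_def by (simp add: frechet_derivative_works)
  obtain Dv where Dv: "((\<lambda>q. ddir v f q) has_derivative Dv) (at p)" using dv unfolding differentiable_def by blast
  obtain Dw where Dw: "((\<lambda>q. ddir w f q) has_derivative Dw) (at p)" using dw unfolding differentiable_def by blast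
  have Dv': "((\<lambda>q. f' q v) has_derivative Dv) (at p)"
    by (rule has_derivative_transform_within_open[OF Dv S]) (use ddir_eq[OF fd'] in auto)
  have Dw': "((\<lambda>q. f' q w) has_derivative Dw) (at p)"
    by (rule has_derivative_transform_within_open[OF Dw S]) (use ddir_eq[OF fd'] in auto)
  have "Dv w = Dw v" by (rule clairaut[OF S fd' Dv' Dw'])
  then show ?thesis using ddir_eq[OF Dv] ddir_eq[OF Dw] by simp
qed

definition dirv :: "bool \<Rightarrow> 2 \<Rightarrow> pt" where
  "dirv b i = (if b then (0, axis i 1) else (axis i 1, 0))"

lemma pd_ddir: "(if b then pdy i else pdx i) = ddir (dirv b i)"
  by (auto simp: fun_eq_iff dirv_def pdx_ddir pdy_ddir)

lemma pdx_eq: "pdx i = ddir (axis i 1, 0)" by (auto simp: fun_eq_iff pdx_ddir)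
lemma pdy_eq: "pdy i = ddir (0, axis i 1)" by (auto simp: fun_eq_iff pdy_ddir)

lemma iterd_snoc: "iterd (os @ [(b,i)]) f = iterd os ((if b then pdy i else pdx i) f)"
proof (induction os)
  case (Cons a os) then show ?case by (cases a) auto
qed simp

lemma sm_pd: "fsmooth_on A f \<Longrightarrow> fsmooth_on A (ddir (dirv b i) f)"
  unfolding fsmooth_on_def
  by (metis iterd_snoc pd_ddir)

lemma sm_pdx: "fsmooth_on A f \<Longrightarrow> fsmooth_on A (pdx i f)"
  using sm_pd[of A f False i] by (simp add: pd_ddir[of False, symmetric])

lemma sm_pdy: "fsmooth_on A f \<Longrightarrow> fsmooth_on A (pdy i f)"
  using sm_pd[of A f True i] by (simp add: pd_ddir[of True, symmetric])

lemma sm_diff_at: "open A \<Longrightarrow> fsmooth_on A f \<Longrightarrow> q \<in> A \<Longrightarrow> f differentiable (at q)"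
  unfolding fsmooth_on_def
  by (metis differentiable_on_eq_differentiable_at iterd.simps(1))

lemma diff_on_cong:
  assumes "open A" "\<And>q. q \<in> A \<Longrightarrow> f q = g q" "f differentiable_on A"
  shows "g differentiable_on A"
  unfolding differentiable_on_eq_differentiable_at[OF assms(1)]
proof
  fix q assume q: "q \<in> A"
  then obtain f' where "(f has_derivative f') (at q)"
    using assms(1,3) unfolding differentiable_on_eq_differentiable_at[OF assms(1)] differentiable_def by blast
  then have "(g has_derivative f') (at q)"
    by (rule has_derivative_transform_within_open[OF _ assms(1) q]) (use assms(2) in auto)
  then show "g differentiable at q" unfolding differentiable_def by blast
qed

lemma iterd_local:
  assumes "open A" "\<And>q. q \<in> A \<Longrightarrow> f q = g q" "q \<in> A"
  shows "iterd os f q = iterd os g q"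
  using assms(3)
proof (induction os arbitrary: q)
  case (Cons a os)
  obtain b i where a: "a = (b,i)" by (cases a)
  have "ddir (dirv b i) (iterd os f) q = ddir (dirv b i) (iterd os g) q"
    by (rule ddir_local[OF assms(1) Cons.prems]) (use Cons.IH in auto)
  then show ?case by (simp add: a pd_ddir)
qed (use assms in simp)

lemma sm_cong:
  assumes "open A" "\<And>q. q \<in> A \<Longrightarrow> f q = g q" "fsmooth_on A f"
  shows "fsmooth_on A g"
  unfolding fsmooth_on_def
proof
  fix os
  show "iterd os g differentiable_on A"
    by (rule diff_on_cong[OF assms(1), of "iterd os f"]) (use iterd_local[OF assms(1,2)] assms(3) in \<open>auto simp: fsmooth_on_def\<close>)
qed

lemma sm_coind:
  assumes A: "open A"
    and K1: "\<And>f. f \<in> K \<Longrightarrow> f differentiable_on A"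
    and K2: "\<And>f b i. f \<in> K \<Longrightarrow> \<exists>g\<in>K. \<forall>q\<in>A. ddir (dirv b i) f q = g q"
    and f: "f \<in> K"
  shows "fsmooth_on A f"
proof -
  have "\<forall>f\<in>K. \<exists>g\<in>K. \<forall>q\<in>A. iterd os f q = g q" for os
  proof (induction os)
    case Nil then show ?case by auto
  next
    case (Cons a os)
    obtain b i where a: "a = (b,i)" by (cases a)
    show ?case
    proof
      fix f assume "f \<in> K"
      then obtain g where g: "g \<in> K" "\<forall>q\<in>A. iterd os f q = g q" using Cons.IH by blast
      obtain g' where g': "g' \<in> K" "\<forall>q\<in>A. ddir (dirv b i) g q = g' q" using K2[OF g(1)] by blast
      have "\<forall>q\<in>A. iterd (a # os) f q = g' q"
      proof
        fix q assume q: "q \<in> A"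
        have "iterd (a # os) f q = ddir (dirv b i) (iterd os f) q" by (simp add: a pd_ddir)
        also have "\<dots> = ddir (dirv b i) g q" by (rule ddir_local[OF A q]) (use g in auto)
        also have "\<dots> = g' q" using g' q by auto
        finally show "iterd (a # os) f q = g' q" .
      qed
      then show "\<exists>g\<in>K. \<forall>q\<in>A. iterd (a # os) f q = g q" using g' by blast
    qed
  qed
  then show ?thesis unfolding fsmooth_on_def
    using diff_on_cong[OF A] K1 f by metis
qed

lemma sm_const: "open A \<Longrightarrow> fsmooth_on A (\<lambda>q. c)"
  by (rule sm_coind[where K = "range (\<lambda>c. \<lambda>q. c)"]) (auto simp: ddir_const)

lemma sm_snd:
  assumes "open A" shows "fsmooth_on A (\<lambda>q::pt. snd q $ i)"
proof (rule sm_coind[where K = "range (\<lambda>c. \<lambda>q. c) \<union> range (\<lambda>i. \<lambda>q::pt. snd q $ i)"])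
  fix f :: "pt \<Rightarrow> real" and b j
  assume "f \<in> range (\<lambda>c. \<lambda>q. c) \<union> range (\<lambda>i. \<lambda>q::pt. snd q $ i)"
  have bl: "bounded_linear (\<lambda>q::pt. snd q $ k)" for k
    using bounded_linear_compose[OF bounded_linear_vec_nth[of k] bounded_linear_snd] by simp
  show "f differentiable_on A" using \<open>f \<in> _\<close>
  proof (elim UnE)
    assume "f \<in> range (\<lambda>c. \<lambda>q. c)" then show ?thesis by auto
  next
    assume "f \<in> range (\<lambda>i. \<lambda>q::pt. snd q $ i)" then show ?thesis
      using bl by (auto intro!: bounded_linear_imp_differentiable_on)
  qed
  show "\<exists>g\<in>range (\<lambda>c. \<lambda>q. c) \<union> range (\<lambda>i. \<lambda>q::pt. snd q $ i). \<forall>q\<in>A. ddir (dirv b j) f q = g q"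
    using \<open>f \<in> _\<close>
  proof
    assume "f \<in> range (\<lambda>c. \<lambda>q. c)" then show ?thesis by (auto simp: ddir_const)
  next
    assume "f \<in> range (\<lambda>i. \<lambda>q::pt. snd q $ i)"
    then obtain k where f: "f = (\<lambda>q. snd q $ k)" by auto
    obtain a c where d: "dirv b j = (a, c)" by (cases "dirv b j")
    show ?thesis by (rule bexI[of _ "\<lambda>q. c $ k"]) (auto simp: f d ddir_snd)
  qed
qed (use assms in auto)

lemma sm_add:
  assumes A: "open A" "fsmooth_on A f" "fsmooth_on A g"
  shows "fsmooth_on A (\<lambda>q. f q + g q)"
proof (rule sm_coind[where K = "{h. \<exists>f g. fsmooth_on A f \<and> fsmooth_on A g \<and> h = (\<lambda>q. f q + g q)}"])
  fix h b i assume "h \<in> {h. \<exists>f g. fsmooth_on A f \<and> fsmooth_on A g \<and> h = (\<lambda>q. f q + g q)}"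
  then obtain f g where fg: "fsmooth_on A f" "fsmooth_on A g" "h = (\<lambda>q. f q + g q)" by auto
  show "h differentiable_on A"
    using fg sm_diff_at[OF A(1)] by (auto simp: differentiable_on_eq_differentiable_at[OF A(1)])
  show "\<exists>g'\<in>{h. \<exists>f g. fsmooth_on A f \<and> fsmooth_on A g \<and> h = (\<lambda>q. f q + g q)}.
          \<forall>q\<in>A. ddir (dirv b i) h q = g' q"
  proof -
    have m: "(\<lambda>q. ddir (dirv b i) f q + ddir (dirv b i) g q) \<in> {h. \<exists>f g. fsmooth_on A f \<and> fsmooth_on A g \<and> h = (\<lambda>q. f q + g q)}"
      using fg sm_pd by blast
    have "\<forall>q\<in>A. ddir (dirv b i) h q = ddir (dirv b i) f q + ddir (dirv b i) g q"
      using fg sm_diff_at[OF A(1)] by (auto simp: ddir_add)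
    then show ?thesis by (intro bexI[OF _ m]) simp
  qed
qed (use assms in auto)

definition prodsum :: "((pt \<Rightarrow> real) \<times> (pt \<Rightarrow> real)) list \<Rightarrow> pt \<Rightarrow> real" where
  "prodsum L q = (\<Sum>x\<leftarrow>L. fst x q * snd x q)"

definition dL :: "pt \<Rightarrow> ((pt \<Rightarrow> real) \<times> (pt \<Rightarrow> real)) list \<Rightarrow> ((pt \<Rightarrow> real) \<times> (pt \<Rightarrow> real)) list" where
  "dL v L = concat (map (\<lambda>x. [(ddir v (fst x), snd x), (fst x, ddir v (snd x))]) L)"

lemma prodsum_diff:
  assumes "\<forall>x\<in>set L. fst x differentiable (at q) \<and> snd x differentiable (at q)"
  shows "prodsum L differentiable (at q)"
  using assms
proof (induction L)
  case Nil then show ?case by (simp add: prodsum_def)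
next
  case (Cons a L)
  have e: "prodsum (a # L) = (\<lambda>q. fst a q * snd a q + prodsum L q)"
    by (simp add: prodsum_def fun_eq_iff)
  show ?case unfolding e using Cons by (auto intro!: differentiable_add differentiable_mult)
qed

lemma prodsum_ddir:
  assumes "\<forall>x\<in>set L. fst x differentiable (at q) \<and> snd x differentiable (at q)"
  shows "ddir v (prodsum L) q = prodsum (dL v L) q"
  using assms
proof (induction L)
  case Nil then show ?case by (simp add: prodsum_def dL_def ddir_const)
next
  case (Cons a L)
  have e: "prodsum (a # L) = (\<lambda>q. fst a q * snd a q + prodsum L q)"
    by (simp add: prodsum_def fun_eq_iff)
  have d: "prodsum L differentiable (at q)" using Cons prodsum_diff by auto
  have "ddir v (prodsum (a # L)) q = ddir v (fst a) q * snd a q + fst a q * ddir v (snd a) q + ddir v (prodsum L) q"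
    unfolding e using Cons.prems d
    by (simp add: ddir_add ddir_mult differentiable_mult)
  also have "\<dots> = prodsum (dL v (a # L)) q"
  proof -
    have IH: "ddir v (prodsum L) q = prodsum (dL v L) q" using Cons by auto
    show ?thesis by (simp only: IH) (simp add: dL_def prodsum_def)
  qed
  finally show ?case .
qed

lemma sm_mult:
  assumes A: "open A" "fsmooth_on A f" "fsmooth_on A g"
  shows "fsmooth_on A (\<lambda>q. f q * g q)"
proof -
  define K where "K = {h. \<exists>L. (\<forall>x\<in>set L. fsmooth_on A (fst x) \<and> fsmooth_on A (snd x)) \<and> (\<forall>q\<in>A. h q = prodsum L q)}"
  have dq: "\<forall>x\<in>set L. fst x differentiable (at q) \<and> snd x differentiable (at q)"
    if "\<forall>x\<in>set L. fsmooth_on A (fst x) \<and> fsmooth_on A (snd x)" "q \<in> A" for L q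
    using that sm_diff_at[OF A(1)] by blast
  show ?thesis
  proof (rule sm_coind[where K = K])
    fix h assume "h \<in> K"
    then obtain L where L: "\<forall>x\<in>set L. fsmooth_on A (fst x) \<and> fsmooth_on A (snd x)" "\<forall>q\<in>A. h q = prodsum L q"
      unfolding K_def by blast
    have "prodsum L differentiable_on A"
      unfolding differentiable_on_eq_differentiable_at[OF A(1)]
      using prodsum_diff dq[OF L(1)] by blast
    then show "h differentiable_on A" by (rule diff_on_cong[OF A(1), rotated]) (use L in auto)
  next
    fix h b i assume "h \<in> K"
    then obtain L where L: "\<forall>x\<in>set L. fsmooth_on A (fst x) \<and> fsmooth_on A (snd x)" "\<forall>q\<in>A. h q = prodsum L q"
      unfolding K_def by blast
    have L': "\<forall>x\<in>set (dL (dirv b i) L). fsmooth_on A (fst x) \<and> fsmooth_on A (snd x)"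
      using L(1) sm_pd by (auto simp: dL_def)
    have "\<forall>q\<in>A. ddir (dirv b i) h q = prodsum (dL (dirv b i) L) q"
    proof
      fix q assume q: "q \<in> A"
      have "ddir (dirv b i) h q = ddir (dirv b i) (prodsum L) q"
        by (rule ddir_local[OF A(1) q]) (use L in auto)
      also have "\<dots> = prodsum (dL (dirv b i) L) q" by (rule prodsum_ddir[OF dq[OF L(1) q]])
      finally show "ddir (dirv b i) h q = prodsum (dL (dirv b i) L) q" .
    qed
    then show "\<exists>g\<in>K. \<forall>q\<in>A. ddir (dirv b i) h q = g q"
      using L' unfolding K_def by blast
  next
    show "(\<lambda>q. f q * g q) \<in> K" unfolding K_def
      by (rule CollectI, rule exI[of _ "[(f,g)]"]) (use A in \<open>auto simp: prodsum_def\<close>)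
  qed (use A in auto)
qed

lemma sm_cmult: "open A \<Longrightarrow> fsmooth_on A f \<Longrightarrow> fsmooth_on A (\<lambda>q. c * f q)"
  using sm_mult[OF _ sm_const] by blast

lemma sm_minus: "open A \<Longrightarrow> fsmooth_on A f \<Longrightarrow> fsmooth_on A (\<lambda>q. - f q)"
  using sm_cmult[of A f "-1"] by simp

lemma sm_diff: "open A \<Longrightarrow> fsmooth_on A f \<Longrightarrow> fsmooth_on A g \<Longrightarrow> fsmooth_on A (\<lambda>q. f q - g q)"
  using sm_add[OF _ _ sm_minus, of A f g] by simp

lemma ddir_power:
  assumes "f differentiable (at p)"
  shows "ddir v (\<lambda>q. (f q)^n) p = real n * (f p)^(n - 1) * ddir v f p"
proof (rule ddir_from_DERIV)
  have "((\<lambda>t. (f (p + t *\<^sub>R v))^n) has_real_derivative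
     of_nat n * ((\<lambda>t. f (p + t *\<^sub>R v)) 0)^(n - 1) * ddir v f p) (at 0)"
    using DERIV_power[OF ddir_DERIV[OF assms], where n=n] by (simp add: mult_ac)
  then show "((\<lambda>t. (f (p + t *\<^sub>R v))^n) has_real_derivative real n * (f p)^(n - 1) * ddir v f p) (at 0)"
    by simp
qed

lemma sm_inverse:
  assumes A: "open A" "fsmooth_on A f" "\<And>q. q \<in> A \<Longrightarrow> f q \<noteq> 0"
  shows "fsmooth_on A (\<lambda>q. 1 / f q)"
proof -
  define K where "K = {h. \<exists>g n. fsmooth_on A g \<and> h = (\<lambda>q. g q * (1 / f q)^n)}"
  have fd: "f differentiable (at q)" if "q \<in> A" for q using sm_diff_at[OF A(1,2) that] .
  show ?thesis
  proof (rule sm_coind[where K = K])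
    fix h assume "h \<in> K"
    then obtain g n where g: "fsmooth_on A g" "h = (\<lambda>q. g q * (1 / f q)^n)" unfolding K_def by blast
    show "h differentiable_on A"
      unfolding differentiable_on_eq_differentiable_at[OF A(1)] g(2)
      using sm_diff_at[OF A(1) g(1)] fd A(3) by (auto intro!: differentiable_mult differentiable_power differentiable_divide)
  next
    fix h b i assume "h \<in> K"
    then obtain g n where g: "fsmooth_on A g" "h = (\<lambda>q. g q * (1 / f q)^n)" unfolding K_def by blast
    define v where "v = dirv b i"
    define g' where "g' = (\<lambda>q. ddir v g q * f q - real n * g q * ddir v f q)"
    have g'sm: "fsmooth_on A g'" unfolding g'_def v_def
      by (intro sm_diff sm_mult sm_cmult sm_pd g A)
    have "\<forall>q\<in>A. ddir v h q = g' q * (1 / f q)^(Suc n)"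
    proof
      fix q assume q: "q \<in> A"
      have d1: "(\<lambda>q. 1 / f q) differentiable (at q)" using fd[OF q] A(3)[OF q] by auto
      have "ddir v h q = ddir v g q * (1 / f q)^n + g q * (real n * (1 / f q)^(n - 1) * (- ddir v f q / (f q)^2))"
        unfolding g(2) using sm_diff_at[OF A(1) g(1) q] d1 fd[OF q] A(3)[OF q]
        by (simp add: ddir_mult ddir_power ddir_inverse differentiable_power)
      also have "\<dots> = g' q * (1 / f q)^(Suc n)"
      proof (cases n)
        case 0 then show ?thesis using A(3)[OF q] by (simp add: g'_def field_simps)
      next
        case (Suc k) then show ?thesis using A(3)[OF q] by (simp add: g'_def field_simps power2_eq_square)
      qed
      finally show "ddir v h q = g' q * (1 / f q)^(Suc n)" .
    qed
    moreover have m: "(\<lambda>q. g' q * (1 / f q)^(Suc n)) \<in> K" unfolding K_def using g'sm by blast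
    ultimately show "\<exists>g\<in>K. \<forall>q\<in>A. ddir (dirv b i) h q = g q"
      unfolding v_def by (intro bexI[OF _ m]) simp
  next
    show "(\<lambda>q. 1 / f q) \<in> K" unfolding K_def
      by (rule CollectI, rule exI[of _ "\<lambda>q. 1"], rule exI[of _ 1]) (use A sm_const in auto)
  qed (use A in auto)
qed

lemma sm_divide:
  "open A \<Longrightarrow> fsmooth_on A g \<Longrightarrow> fsmooth_on A f \<Longrightarrow> (\<And>q. q \<in> A \<Longrightarrow> f q \<noteq> 0) \<Longrightarrow>
   fsmooth_on A (\<lambda>q. g q / f q)"
  using sm_mult[OF _ _ sm_inverse, of A g f] by simp

lemma sm_sum2:
  "open A \<Longrightarrow> (\<And>j. fsmooth_on A (f j)) \<Longrightarrow> fsmooth_on A (\<lambda>q. \<Sum>j\<in>(UNIV::2 set). f j q)"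
  by (simp add: sum_2 sm_add)

lemma ddir_snd_gen: "ddir v (\<lambda>q::pt. snd q $ i) p = snd v $ i"
  using ddir_snd[of "fst v" "snd v" i p] by simp

lemma ddir_minus:
  assumes "f differentiable (at p)"
  shows "ddir v (\<lambda>q. - f q) p = - ddir v f p"
  using ddir_cmult[OF assms, of v "-1"] by simp

lemma ddir_divide:
  assumes "f differentiable (at p)" "g differentiable (at p)" "g p \<noteq> 0"
  shows "ddir v (\<lambda>q. f q / g q) p = (ddir v f p * g p - f p * ddir v g p) / (g p)^2"
proof -
  have d: "(\<lambda>q. 1 / g q) differentiable (at p)" using assms by auto
  have "ddir v (\<lambda>q. f q / g q) p = ddir v (\<lambda>q. f q * (1 / g q)) p" by simp
  also have "\<dots> = ddir v f p * (1 / g p) + f p * (- ddir v g p / (g p)^2)"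
    using ddir_mult[OF assms(1) d] ddir_inverse[OF assms(2,3)] by simp
  also have "\<dots> = (ddir v f p * g p - f p * ddir v g p) / (g p)^2"
    using assms(3) by (simp add: field_simps power2_eq_square)
  finally show ?thesis .
qed

lemma snd_differentiable[simp]: "(\<lambda>q::pt. snd q $ i) differentiable (at p)"
proof -
  have "bounded_linear (\<lambda>q::pt. snd q $ i)"
    using bounded_linear_compose[OF bounded_linear_vec_nth[of i] bounded_linear_snd] by simp
  then show ?thesis by (rule bounded_linear_imp_differentiable)
qed


lemma pdx_add: "f differentiable (at p) \<Longrightarrow> g differentiable (at p) \<Longrightarrow>
  pdx i (\<lambda>q. f q + g q) p = pdx i f p + pdx i g p" unfolding pdx_eq by (rule ddir_add)
lemma pdy_add: "f differentiable (at p) \<Longrightarrow> g differentiable (at p) \<Longrightarrow>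
  pdy i (\<lambda>q. f q + g q) p = pdy i f p + pdy i g p" unfolding pdy_eq by (rule ddir_add)
lemma pdx_diff: "f differentiable (at p) \<Longrightarrow> g differentiable (at p) \<Longrightarrow>
  pdx i (\<lambda>q. f q - g q) p = pdx i f p - pdx i g p" unfolding pdx_eq by (rule ddir_diff)
lemma pdy_diff: "f differentiable (at p) \<Longrightarrow> g differentiable (at p) \<Longrightarrow>
  pdy i (\<lambda>q. f q - g q) p = pdy i f p - pdy i g p" unfolding pdy_eq by (rule ddir_diff)
lemma pdx_mult: "f differentiable (at p) \<Longrightarrow> g differentiable (at p) \<Longrightarrow>
  pdx i (\<lambda>q. f q * g q) p = pdx i f p * g p + f p * pdx i g p" unfolding pdx_eq by (rule ddir_mult)
lemma pdy_mult: "f differentiable (at p) \<Longrightarrow> g differentiable (at p) \<Longrightarrow>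
  pdy i (\<lambda>q. f q * g q) p = pdy i f p * g p + f p * pdy i g p" unfolding pdy_eq by (rule ddir_mult)
lemma pdx_minus: "f differentiable (at p) \<Longrightarrow>
  pdx i (\<lambda>q. - f q) p = - pdx i f p" unfolding pdx_eq by (rule ddir_minus)
lemma pdy_minus: "f differentiable (at p) \<Longrightarrow>
  pdy i (\<lambda>q. - f q) p = - pdy i f p" unfolding pdy_eq by (rule ddir_minus)
lemma pdx_const: "pdx i (\<lambda>q. c) p = 0" unfolding pdx_eq by (rule ddir_const)
lemma pdy_const: "pdy i (\<lambda>q. c) p = 0" unfolding pdy_eq by (rule ddir_const)
lemma pdx_divide: "f differentiable (at p) \<Longrightarrow> g differentiable (at p) \<Longrightarrow> g p \<noteq> 0 \<Longrightarrow>
  pdx i (\<lambda>q. f q / g q) p = (pdx i f p * g p - f p * pdx i g p) / (g p)^2"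
  unfolding pdx_eq by (rule ddir_divide)
lemma pdy_divide: "f differentiable (at p) \<Longrightarrow> g differentiable (at p) \<Longrightarrow> g p \<noteq> 0 \<Longrightarrow>
  pdy i (\<lambda>q. f q / g q) p = (pdy i f p * g p - f p * pdy i g p) / (g p)^2"
  unfolding pdy_eq by (rule ddir_divide)
lemma pdx_snd: "pdx i (\<lambda>q::pt. snd q $ j) p = 0"
  unfolding pdx_eq by (simp add: ddir_snd_gen)
lemma pdy_snd: "pdy i (\<lambda>q::pt. snd q $ j) p = (if j = i then 1 else 0)"
  unfolding pdy_eq by (simp add: ddir_snd_gen axis_def)


lemmas pd_simps = pdx_add pdy_add pdx_diff pdy_diff pdx_mult pdy_mult pdx_minus pdy_minus pdx_const pdy_const pdx_divide pdy_divide pdx_snd pdy_snd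

lemma pdx_local: "open A \<Longrightarrow> p \<in> A \<Longrightarrow> (\<And>q. q \<in> A \<Longrightarrow> f q = g q) \<Longrightarrow> pdx i f p = pdx i g p"
  unfolding pdx_eq by (rule ddir_local)
lemma pdy_local: "open A \<Longrightarrow> p \<in> A \<Longrightarrow> (\<And>q. q \<in> A \<Longrightarrow> f q = g q) \<Longrightarrow> pdy i f p = pdy i g p"
  unfolding pdy_eq by (rule ddir_local)

lemma pdy_fst_only: "pdy i (\<lambda>q. c (fst q)) p = 0"
  unfolding pdy_def by simp

lemma pdy_quad:
  "pdy k (\<lambda>q. \<Sum>i\<in>UNIV. \<Sum>j\<in>UNIV. c (fst q) $ i $ j * snd q $ i * snd q $ j) p
     = (\<Sum>j\<in>UNIV. (c (fst p) $ k $ j + c (fst p) $ j $ k) * snd p $ j)"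
proof -
  obtain x y where p: "p = (x, y)" by (cases p)
  have "((\<lambda>t. \<Sum>i\<in>UNIV. \<Sum>j\<in>UNIV. c x $ i $ j * (y + t *\<^sub>R axis k 1) $ i * (y + t *\<^sub>R axis k 1) $ j)
     has_real_derivative (\<Sum>j\<in>UNIV. (c x $ k $ j + c x $ j $ k) * y $ j)) (at 0)"
    using exhaust_2[of k]
    by (auto simp: sum_2 axis_def intro!: derivative_eq_intros) (auto simp: algebra_simps)
  then show ?thesis unfolding pdy_def p by (intro DERIV_imp_deriv) simp
qed

lemma pdy_lin:
  "pdy k (\<lambda>q. \<Sum>j\<in>UNIV. c (fst q) $ j * snd q $ j) p = c (fst p) $ k"
proof -
  obtain x y where p: "p = (x, y)" by (cases p)
  have "((\<lambda>t. \<Sum>j\<in>UNIV. c x $ j * (y + t *\<^sub>R axis k 1) $ j)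
     has_real_derivative c x $ k) (at 0)"
    using exhaust_2[of k]
    by (auto simp: sum_2 axis_def intro!: derivative_eq_intros)
  then show ?thesis unfolding pdy_def p by (intro DERIV_imp_deriv) simp
qed

lemma sm_diff_pd: "open A \<Longrightarrow> fsmooth_on A f \<Longrightarrow> q \<in> A \<Longrightarrow> pdx i f differentiable (at q)"
  "open A \<Longrightarrow> fsmooth_on A f \<Longrightarrow> q \<in> A \<Longrightarrow> pdy i f differentiable (at q)"
  using sm_diff_at sm_pdx sm_pdy by blast+

lemma pdxy_comm:
  assumes "open A" "fsmooth_on A f" "p \<in> A"
  shows "pdy j (pdx i f) p = pdx i (pdy j f) p"
proof -
  have "ddir (0, axis j 1) (\<lambda>q. ddir (axis i 1, 0) f q) p = ddir (axis i 1, 0) (\<lambda>q. ddir (0, axis j 1) f q) p"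
    by (rule ddir_comm[OF assms(1,3)]) (use sm_diff_at[OF assms(1,2)] sm_diff_pd[OF assms(1,2,3)] in \<open>auto simp: pdx_eq pdy_eq\<close>)
  then show ?thesis by (simp add: pdx_eq pdy_eq)
qed

lemma pdyy_comm:
  assumes "open A" "fsmooth_on A f" "p \<in> A"
  shows "pdy j (pdy i f) p = pdy i (pdy j f) p"
proof -
  have "ddir (0, axis j 1) (\<lambda>q. ddir (0, axis i 1) f q) p = ddir (0, axis i 1) (\<lambda>q. ddir (0, axis j 1) f q) p"
    by (rule ddir_comm[OF assms(1,3)]) (use sm_diff_at[OF assms(1,2)] sm_diff_pd[OF assms(1,2,3)] in \<open>auto simp: pdx_eq pdy_eq\<close>)
  then show ?thesis by (simp add: pdx_eq pdy_eq)
qed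

definition adj2 :: "real^2^2 \<Rightarrow> 2 \<Rightarrow> 2 \<Rightarrow> real" where
  "adj2 M i j = (if i = 1 \<and> j = 1 then M$2$2 else if i = 1 \<and> j = 2 then - M$1$2
     else if i = 2 \<and> j = 1 then - M$2$1 else M$1$1)"

lemma inv2:
  fixes M :: "real^2^2"
  assumes d: "det M \<noteq> 0"
  shows "matrix_inv M = (\<chi> i j. adj2 M i j / det M)"
proof -
  define B where "B = (\<chi> i j. adj2 M i j / det M)"
  have A1: "(\<Sum>k\<in>UNIV. M$i$k * adj2 M k j) = (if i = j then det M else 0)" for i j
    using exhaust_2[of i] exhaust_2[of j] by (auto simp: sum_2 adj2_def det_2 algebra_simps)
  have A2: "(\<Sum>k\<in>UNIV. adj2 M i k * M$k$j) = (if i = j then det M else 0)" for i j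
    using exhaust_2[of i] exhaust_2[of j] by (auto simp: sum_2 adj2_def det_2 algebra_simps)
  have MB: "M ** B = mat 1" "B ** M = mat 1"
    using d by (auto simp: B_def vec_eq_iff matrix_matrix_mult_def mat_def
        sum_divide_distrib[symmetric] A1 A2)
  have ex: "\<exists>A'. M ** A' = mat 1 \<and> A' ** M = mat 1" using MB by blast
  have X: "M ** matrix_inv M = mat 1 \<and> matrix_inv M ** M = mat 1"
    unfolding matrix_inv_def by (rule someI_ex[OF ex])
  have "matrix_inv M = matrix_inv M ** (M ** B)" using MB by (simp add: matrix_mul_rid)
  also have "\<dots> = (matrix_inv M ** M) ** B" by (simp add: matrix_mul_assoc)
  also have "\<dots> = B" using X by (simp add: matrix_mul_lid)
  finally show ?thesis by (simp add: B_def)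
qed

locale RS =
  fixes A :: "pt set" and F :: "pt \<Rightarrow> real" and eps :: real and m :: "2 \<Rightarrow> pt \<Rightarrow> real"
  assumes PR: "pseudo_riemannian A F" and BF: "berwald_frame A F eps m"
begin

lemma Aopen: "open A" using PR by (simp add: pseudo_riemannian_def pseudo_finsler_def conic_set_def)
lemma Fsm: "fsmooth_on A F" using PR by (simp add: pseudo_riemannian_def pseudo_finsler_def)
lemma Fnz: "q \<in> A \<Longrightarrow> F q \<noteq> 0" using PR by (simp add: pseudo_riemannian_def pseudo_finsler_def)
lemma detnz: "q \<in> A \<Longrightarrow> det (gmat F q) \<noteq> 0" using PR by (simp add: pseudo_riemannian_def pseudo_finsler_def)
lemma msm: "fsmooth_on A (m i)" using BF by (simp add: berwald_frame_def)
lemma frame: "q \<in> A \<Longrightarrow> gmet F i j q = ell_lo F i q * ell_lo F j q + eps * m i q * m j q"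
  using BF by (simp add: berwald_frame_def)
lemma eps_cases: "eps = 1 \<or> eps = -1" using BF by (simp add: berwald_frame_def)
lemma eps2: "eps * eps = 1" using eps_cases by auto
lemma eps_nz: "eps \<noteq> 0" using eps_cases by auto

lemma F_diff[simp]: "q \<in> A \<Longrightarrow> F differentiable (at q)" using sm_diff_at[OF Aopen Fsm] .
lemma m_diff[simp]: "q \<in> A \<Longrightarrow> m i differentiable (at q)" using sm_diff_at[OF Aopen msm] .

definition aa :: "real^2 \<Rightarrow> real^2^2" where
  "aa = (SOME a. \<forall>x y. (x,y) \<in> A \<longrightarrow> (F (x,y))\<^sup>2 = (\<Sum>i\<in>UNIV. \<Sum>j\<in>UNIV. a x $ i $ j * y $ i * y $ j))"

lemma aa: "(x,y) \<in> A \<Longrightarrow> (F (x,y))\<^sup>2 = (\<Sum>i\<in>UNIV. \<Sum>j\<in>UNIV. aa x $ i $ j * y $ i * y $ j)"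
proof -
  have "\<exists>a. \<forall>x y. (x,y) \<in> A \<longrightarrow> (F (x,y))\<^sup>2 = (\<Sum>i\<in>UNIV. \<Sum>j\<in>UNIV. a x $ i $ j * y $ i * y $ j)"
    using PR by (simp add: pseudo_riemannian_def)
  from someI_ex[OF this] show "(x,y) \<in> A \<Longrightarrow> ?thesis" unfolding aa_def by blast
qed

lemma Fsq_quad: "q \<in> A \<Longrightarrow> Fsq F q = (\<Sum>i\<in>UNIV. \<Sum>j\<in>UNIV. aa (fst q) $ i $ j * snd q $ i * snd q $ j)"
  using aa[of "fst q" "snd q"] by (simp add: Fsq_def)

lemma pdyFsq_a: "q \<in> A \<Longrightarrow> pdy l (Fsq F) q = (\<Sum>j\<in>UNIV. (aa (fst q) $ l $ j + aa (fst q) $ j $ l) * snd q $ j)"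
proof -
  assume q: "q \<in> A"
  have "pdy l (Fsq F) q = pdy l (\<lambda>q. \<Sum>i\<in>UNIV. \<Sum>j\<in>UNIV. aa (fst q) $ i $ j * snd q $ i * snd q $ j) q"
    by (rule pdy_local[OF Aopen q]) (simp add: Fsq_quad)
  also have "\<dots> = (\<Sum>j\<in>UNIV. (aa (fst q) $ l $ j + aa (fst q) $ j $ l) * snd q $ j)"
    by (rule pdy_quad)
  finally show ?thesis .
qed

lemma gmet_x: "q \<in> A \<Longrightarrow> gmet F a b q = (aa (fst q) $ a $ b + aa (fst q) $ b $ a) / 2"
proof -
  assume q: "q \<in> A"
  define c where "c x = (\<chi> j. aa x $ b $ j + aa x $ j $ b)" for x
  have "pdy a (pdy b (Fsq F)) q = pdy a (\<lambda>q. \<Sum>j\<in>UNIV. c (fst q) $ j * snd q $ j) q"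
    by (rule pdy_local[OF Aopen q]) (simp add: pdyFsq_a c_def)
  also have "\<dots> = c (fst q) $ a" by (rule pdy_lin)
  finally show ?thesis by (simp add: gmet_def c_def)
qed

lemma g_sym: "q \<in> A \<Longrightarrow> gmet F a b q = gmet F b a q"
  by (simp add: gmet_x)

lemma pdy_g[simp]: "q \<in> A \<Longrightarrow> pdy c (gmet F a b) q = 0"
proof -
  assume q: "q \<in> A"
  have "pdy c (gmet F a b) q = pdy c (\<lambda>q. (\<lambda>x. (aa x $ a $ b + aa x $ b $ a) / 2) (fst q)) q"
    by (rule pdy_local[OF Aopen q]) (simp add: gmet_x)
  also have "\<dots> = 0" by (rule pdy_fst_only)
  finally show ?thesis .
qed

lemma Fsq_g: "q \<in> A \<Longrightarrow> Fsq F q = (\<Sum>a\<in>UNIV. \<Sum>b\<in>UNIV. gmet F a b q * snd q $ a * snd q $ b)"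
  by (simp add: Fsq_quad gmet_x sum_2 field_simps)

lemma F2_g: "q \<in> A \<Longrightarrow> (F q)^2 = (\<Sum>a\<in>UNIV. \<Sum>b\<in>UNIV. gmet F a b q * snd q $ a * snd q $ b)"
  using Fsq_g by (simp add: Fsq_def)

lemma pdyFsq_g: "q \<in> A \<Longrightarrow> pdy l (Fsq F) q = 2 * (\<Sum>b\<in>UNIV. gmet F l b q * snd q $ b)"
  by (simp add: pdyFsq_a gmet_x sum_2 field_simps)

lemma Fsq_eq: "Fsq F = (\<lambda>q. F q * F q)" by (simp add: Fsq_def fun_eq_iff power2_eq_square)

lemma Fsq_sm: "fsmooth_on A (Fsq F)"
  unfolding Fsq_eq by (intro sm_mult Aopen Fsm)

lemma g_sm: "fsmooth_on A (gmet F a b)"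
proof -
  have "gmet F a b = (\<lambda>q. 1/2 * pdy a (pdy b (Fsq F)) q)" by (simp add: fun_eq_iff gmet_def)
  then show ?thesis by (simp only:) (intro sm_cmult Aopen sm_pdy Fsq_sm)
qed

lemma g_diff[simp]: "q \<in> A \<Longrightarrow> gmet F a b differentiable (at q)" using sm_diff_at[OF Aopen g_sm] .
lemma pdxg_diff[simp]: "q \<in> A \<Longrightarrow> pdx k (gmet F a b) differentiable (at q)"
  using sm_diff_pd[OF Aopen g_sm] by blast

definition detg :: "pt \<Rightarrow> real" where
  "detg q = gmet F 1 1 q * gmet F 2 2 q - gmet F 1 2 q * gmet F 2 1 q"

lemma detg_nz: "q \<in> A \<Longrightarrow> detg q \<noteq> 0"
  using detnz by (simp add: detg_def det_2 gmat_def)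

lemma detg_sm: "fsmooth_on A detg"
  unfolding detg_def by (intro sm_diff sm_mult g_sm Aopen)

definition hexp :: "2 \<Rightarrow> 2 \<Rightarrow> pt \<Rightarrow> real" where
  "hexp i j q = (if i = 1 \<and> j = 1 then gmet F 2 2 q else if i = 1 \<and> j = 2 then - gmet F 1 2 q
     else if i = 2 \<and> j = 1 then - gmet F 2 1 q else gmet F 1 1 q) / detg q"

lemma ginv_eq: "q \<in> A \<Longrightarrow> ginv F i j q = hexp i j q"
  using inv2[OF detnz] by (simp add: ginv_def hexp_def adj2_def gmat_def detg_def det_2)

lemma hexp_sm: "fsmooth_on A (hexp i j)"
proof -
  have num: "fsmooth_on A (\<lambda>q. if i = 1 \<and> j = 1 then gmet F 2 2 q else if i = 1 \<and> j = 2 then - gmet F 1 2 q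
     else if i = 2 \<and> j = 1 then - gmet F 2 1 q else gmet F 1 1 q)"
    using exhaust_2[of i] exhaust_2[of j] by (auto simp: g_sm sm_minus[OF Aopen g_sm])
  show ?thesis unfolding hexp_def
    by (rule sm_divide[OF Aopen num detg_sm detg_nz])
qed

lemma h_sm: "fsmooth_on A (ginv F i j)"
  by (rule sm_cong[OF Aopen _ hexp_sm]) (simp add: ginv_eq)

lemma h_diff[simp]: "q \<in> A \<Longrightarrow> ginv F i j differentiable (at q)" using sm_diff_at[OF Aopen h_sm] .

definition hnum :: "2 \<Rightarrow> 2 \<Rightarrow> pt \<Rightarrow> real" where
  "hnum i j q = (if i = 1 \<and> j = 1 then gmet F 2 2 q else if i = 1 \<and> j = 2 then - gmet F 1 2 q
     else if i = 2 \<and> j = 1 then - gmet F 2 1 q else gmet F 1 1 q)"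

lemma hexp_num: "hexp i j q = hnum i j q / detg q" by (simp add: hexp_def hnum_def)

lemma h_inv1: "q \<in> A \<Longrightarrow> (\<Sum>b\<in>UNIV. ginv F a b q * gmet F b c q) = (if a = c then 1 else 0)"
proof -
  assume q: "q \<in> A"
  have N: "(\<Sum>b\<in>UNIV. hnum a b q * gmet F b c q) = (if a = c then detg q else 0)"
    using exhaust_2[of a] exhaust_2[of c] g_sym[OF q, of 1 2]
    by (auto simp: sum_2 hnum_def detg_def algebra_simps)
  show ?thesis using detg_nz[OF q]
    by (simp add: ginv_eq[OF q] hexp_num sum_divide_distrib[symmetric] N)
qed

lemma h_inv2: "q \<in> A \<Longrightarrow> (\<Sum>b\<in>UNIV. gmet F a b q * ginv F b c q) = (if a = c then 1 else 0)"
proof -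
  assume q: "q \<in> A"
  have N: "(\<Sum>b\<in>UNIV. gmet F a b q * hnum b c q) = (if a = c then detg q else 0)"
    using exhaust_2[of a] exhaust_2[of c] g_sym[OF q, of 1 2]
    by (auto simp: sum_2 hnum_def detg_def algebra_simps)
  show ?thesis using detg_nz[OF q]
    by (simp add: ginv_eq[OF q] hexp_num sum_divide_distrib[symmetric] N)
qed

lemma h_sym: "q \<in> A \<Longrightarrow> ginv F a b q = ginv F b a q"
proof -
  assume q: "q \<in> A"
  have g12: "gmet F 2 1 q = gmet F 1 2 q" by (rule g_sym[OF q])
  have "hexp a b q = hexp b a q"
    using exhaust_2[of a] exhaust_2[of b] by (elim disjE) (simp_all add: hexp_def g12)
  then show ?thesis by (simp add: ginv_eq[OF q])
qed

lemma pdy_h[simp]: "q \<in> A \<Longrightarrow> pdy c (ginv F a b) q = 0"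
proof -
  assume q: "q \<in> A"
  have "pdy c (ginv F a b) q = pdy c (hexp a b) q"
    by (rule pdy_local[OF Aopen q]) (simp add: ginv_eq)
  also have "\<dots> = 0"
  proof -
    have dd: "detg differentiable (at q)" using sm_diff_at[OF Aopen detg_sm q] .
    have pd: "pdy c detg q = 0" unfolding detg_def using q by (simp add: pd_simps)
    show ?thesis using exhaust_2[of a] exhaust_2[of b] q dd pd detg_nz[OF q]
      unfolding hexp_def by (auto simp: pd_simps)
  qed
  finally show ?thesis .
qed

end

context RS
begin

lemma pdxFsq: "q \<in> A \<Longrightarrow> pdx l (Fsq F) q = (\<Sum>a\<in>UNIV. \<Sum>b\<in>UNIV. pdx l (gmet F a b) q * snd q $ a * snd q $ b)"
proof -
  assume q: "q \<in> A"
  have "pdx l (Fsq F) q = pdx l (\<lambda>q. \<Sum>a\<in>UNIV. \<Sum>b\<in>UNIV. gmet F a b q * snd q $ a * snd q $ b) q"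
    by (rule pdx_local[OF Aopen q]) (simp add: Fsq_g)
  also have "\<dots> = (\<Sum>a\<in>UNIV. \<Sum>b\<in>UNIV. pdx l (gmet F a b) q * snd q $ a * snd q $ b)"
    using q by (simp add: sum_2 pd_simps)
  finally show ?thesis .
qed

lemma pdxpdyFsq: "q \<in> A \<Longrightarrow> pdx k (pdy l (Fsq F)) q = 2 * (\<Sum>b\<in>UNIV. pdx k (gmet F l b) q * snd q $ b)"
proof -
  assume q: "q \<in> A"
  have "pdx k (pdy l (Fsq F)) q = pdx k (\<lambda>q. 2 * (\<Sum>b\<in>UNIV. gmet F l b q * snd q $ b)) q"
    by (rule pdx_local[OF Aopen q]) (simp add: pdyFsq_g)
  also have "\<dots> = 2 * (\<Sum>b\<in>UNIV. pdx k (gmet F l b) q * snd q $ b)"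
    using q by (simp add: sum_2 pd_simps)
  finally show ?thesis .
qed

lemma pdx_g_sym: "q \<in> A \<Longrightarrow> pdx k (gmet F a b) q = pdx k (gmet F b a) q"
  by (rule pdx_local[OF Aopen]) (auto simp: g_sym)

lemma pdy_pdxg[simp]: "q \<in> A \<Longrightarrow> pdy k (pdx i (gmet F a b)) q = 0"
proof -
  assume q: "q \<in> A"
  have "pdy k (pdx i (gmet F a b)) q = pdx i (pdy k (gmet F a b)) q"
    by (rule pdxy_comm[OF Aopen g_sm q])
  also have "\<dots> = pdx i (\<lambda>q. 0) q" by (rule pdx_local[OF Aopen q]) simp
  also have "\<dots> = 0" by (simp add: pd_simps)
  finally show ?thesis .
qed

definition Gm :: "2 \<Rightarrow> 2 \<Rightarrow> 2 \<Rightarrow> pt \<Rightarrow> real" where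
  "Gm c i a = (\<lambda>q. 1/2 * (\<Sum>l\<in>UNIV. ginv F c l q *
     (pdx i (gmet F l a) q + pdx a (gmet F l i) q - pdx l (gmet F i a) q)))"

lemma Gm_sm: "fsmooth_on A (Gm c i a)"
  unfolding Gm_def
  by (intro sm_cmult sm_sum2 sm_mult sm_add sm_diff sm_pdx g_sm h_sm Aopen)

lemma Gm_diff[simp]: "q \<in> A \<Longrightarrow> Gm c i a differentiable (at q)" using sm_diff_at[OF Aopen Gm_sm] .

lemma Gm_sym: "q \<in> A \<Longrightarrow> Gm c i a q = Gm c a i q"
  unfolding Gm_def by (simp add: pdx_g_sym[of q _ i a] algebra_simps)

lemma pdy_Gm[simp]: "q \<in> A \<Longrightarrow> pdy k (Gm c i a) q = 0"
  unfolding Gm_def by (simp add: sum_2 pd_simps)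

lemma spray_eq: "q \<in> A \<Longrightarrow> spray F j q = 1/2 * (\<Sum>a\<in>UNIV. \<Sum>b\<in>UNIV. Gm j a b q * snd q $ a * snd q $ b)"
  by (simp add: spray_def pdxFsq pdxpdyFsq Gm_def sum_2 algebra_simps)

lemma spray_sm: "fsmooth_on A (spray F j)"
proof -
  have e: "spray F j = (\<lambda>p. 1/4 * (\<Sum>l\<in>UNIV. ginv F j l p *
      ((\<Sum>k\<in>UNIV. snd p $ k * pdx k (pdy l (Fsq F)) p) - pdx l (Fsq F) p)))"
    by (simp add: fun_eq_iff spray_def)
  show ?thesis unfolding e
    by (intro sm_cmult sm_sum2 sm_mult sm_add sm_diff sm_pdx sm_pdy sm_snd Fsq_sm h_sm Aopen)
qed

lemma N_sm: "fsmooth_on A (nlconn F j i)"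
proof -
  have e: "nlconn F j i = pdy i (spray F j)" by (simp add: fun_eq_iff nlconn_def)
  show ?thesis unfolding e by (intro sm_pdy spray_sm)
qed

lemma N_diff[simp]: "q \<in> A \<Longrightarrow> nlconn F j i differentiable (at q)" using sm_diff_at[OF Aopen N_sm] .

lemma N_eq: "q \<in> A \<Longrightarrow> nlconn F j i q = (\<Sum>k\<in>UNIV. Gm j i k q * snd q $ k)"
proof -
  assume q: "q \<in> A"
  have "nlconn F j i q = pdy i (\<lambda>q. 1/2 * (\<Sum>a\<in>UNIV. \<Sum>b\<in>UNIV. Gm j a b q * snd q $ a * snd q $ b)) q"
    unfolding nlconn_def by (rule pdy_local[OF Aopen q]) (simp add: spray_eq)
  also have "\<dots> = (\<Sum>k\<in>UNIV. Gm j i k q * snd q $ k)"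
    using q exhaust_2[of i] Gm_sym[OF q, of j 1 2]
    by (auto simp: sum_2 pd_simps algebra_simps)
  finally show ?thesis .
qed

lemma pdy_N: "q \<in> A \<Longrightarrow> pdy k (nlconn F j i) q = Gm j i k q"
proof -
  assume q: "q \<in> A"
  have "pdy k (nlconn F j i) q = pdy k (\<lambda>q. \<Sum>l\<in>UNIV. Gm j i l q * snd q $ l) q"
    by (rule pdy_local[OF Aopen q]) (simp add: N_eq)
  also have "\<dots> = Gm j i k q"
    using q exhaust_2[of k] by (auto simp: sum_2 pd_simps)
  finally show ?thesis .
qed

lemma G6: "q \<in> A \<Longrightarrow> (\<Sum>i\<in>UNIV. snd q $ i * nlconn F j i q) = 2 * spray F j q"
  by (simp add: N_eq spray_eq sum_2 algebra_simps)

lemma sum_swap_inv: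
  fixes h s :: "2 \<Rightarrow> 2 \<Rightarrow> real" and X :: "2 \<Rightarrow> real"
  assumes inv: "\<And>l b. (\<Sum>c\<in>UNIV. h c l * s c b) = (if l = b then 1 else 0)"
  shows "(\<Sum>c\<in>UNIV. (\<Sum>l\<in>UNIV. h c l * X l) * s c b) = X b"
proof -
  have "(\<Sum>c\<in>UNIV. (\<Sum>l\<in>UNIV. h c l * X l) * s c b)
      = X 1 * (\<Sum>c\<in>UNIV. h c 1 * s c b) + X 2 * (\<Sum>c\<in>UNIV. h c 2 * s c b)"
    by (simp add: sum_2 algebra_simps)
  also have "\<dots> = X b" using exhaust_2[of b] by (auto simp: inv)
  finally show ?thesis .
qed

lemma compat: "q \<in> A \<Longrightarrow> pdx i (gmet F a b) q =
   (\<Sum>c\<in>UNIV. Gm c i a q * gmet F c b q + Gm c i b q * gmet F a c q)"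
proof -
  assume q: "q \<in> A"
  have inv: "(\<Sum>c\<in>UNIV. ginv F c l q * gmet F c b q) = (if l = b then 1 else 0)" for l b
    using h_inv1[OF q, of l b] by (simp add: h_sym[OF q])
  define X where "X a l = pdx i (gmet F l a) q + pdx a (gmet F l i) q - pdx l (gmet F i a) q" for a l
  have G: "Gm c i a' q = 1/2 * (\<Sum>l\<in>UNIV. ginv F c l q * X a' l)" for c a'
    by (simp add: Gm_def X_def)
  have 1: "(\<Sum>c\<in>UNIV. Gm c i a q * gmet F c b q) = 1/2 * X a b"
  proof -
    have "(\<Sum>c\<in>UNIV. Gm c i a q * gmet F c b q)
        = (\<Sum>c\<in>UNIV. 1/2 * ((\<Sum>l\<in>UNIV. ginv F c l q * X a l) * gmet F c b q))"
      by (rule sum.cong) (simp_all add: G)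
    also have "\<dots> = 1/2 * (\<Sum>c\<in>UNIV. (\<Sum>l\<in>UNIV. ginv F c l q * X a l) * gmet F c b q)"
      by (rule sum_distrib_left[symmetric])
    also have "\<dots> = 1/2 * X a b"
      using sum_swap_inv[where h = "\<lambda>c l. ginv F c l q" and s = "\<lambda>c b. gmet F c b q", OF inv, of "X a" b]
      by simp
    finally show ?thesis .
  qed
  have 2: "(\<Sum>c\<in>UNIV. Gm c i b q * gmet F a c q) = 1/2 * X b a"
  proof -
    have "(\<Sum>c\<in>UNIV. Gm c i b q * gmet F a c q)
        = (\<Sum>c\<in>UNIV. 1/2 * ((\<Sum>l\<in>UNIV. ginv F c l q * X b l) * gmet F c a q))"
      by (rule sum.cong) (simp_all add: G g_sym[OF q, of a])
    also have "\<dots> = 1/2 * (\<Sum>c\<in>UNIV. (\<Sum>l\<in>UNIV. ginv F c l q * X b l) * gmet F c a q)"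
      by (rule sum_distrib_left[symmetric])
    also have "\<dots> = 1/2 * X b a"
      using sum_swap_inv[where h = "\<lambda>c l. ginv F c l q" and s = "\<lambda>c b. gmet F c b q", OF inv, of "X b" a]
      by simp
    finally show ?thesis .
  qed
  have s1: "pdx i (gmet F b a) q = pdx i (gmet F a b) q" by (rule pdx_g_sym[OF q])
  have s2: "pdx a (gmet F b i) q = pdx a (gmet F i b) q" by (rule pdx_g_sym[OF q])
  have s3: "pdx b (gmet F i a) q = pdx b (gmet F a i) q" by (rule pdx_g_sym[OF q])
  show ?thesis
  proof -
    have "(\<Sum>c\<in>UNIV. Gm c i a q * gmet F c b q + Gm c i b q * gmet F a c q) = 1/2 * X a b + 1/2 * X b a"
      by (simp only: sum.distrib 1 2)
    also have "\<dots> = pdx i (gmet F a b) q" by (simp add: X_def s1 s2 s3 field_simps)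
    finally show ?thesis by simp
  qed
qed

end

lemma delta_r: "(\<Sum>b\<in>(UNIV::2 set). (X::2\<Rightarrow>real) b * (if b = j then 1 else 0)) = X j"
  using exhaust_2[of j] by (auto simp: sum_2)
lemma delta_r': "(\<Sum>b\<in>(UNIV::2 set). (X::2\<Rightarrow>real) b * (if j = b then 1 else 0)) = X j"
  using exhaust_2[of j] by (auto simp: sum_2)
lemma delta_l: "(\<Sum>b\<in>(UNIV::2 set). (if b = j then 1 else 0) * (X::2\<Rightarrow>real) b) = X j"
  using exhaust_2[of j] by (auto simp: sum_2)
lemma delta_l': "(\<Sum>b\<in>(UNIV::2 set). (if j = b then 1 else 0) * (X::2\<Rightarrow>real) b) = X j"
  using exhaust_2[of j] by (auto simp: sum_2)
lemma swap_sum: "(\<Sum>c\<in>(UNIV::2 set). (\<Sum>b\<in>(UNIV::2 set). (X::2\<Rightarrow>real) b * Y b c) * Z c) =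
   (\<Sum>b\<in>UNIV. X b * (\<Sum>c\<in>UNIV. Y b c * Z c))"
  by (simp add: sum_2 algebra_simps)

lemma ttrick:
  fixes n mm :: "2 \<Rightarrow> real"
  assumes "\<And>a b. n a * mm b + mm a * n b = 0" "mm 1 \<noteq> 0 \<or> mm 2 \<noteq> 0"
  shows "n a = 0"
proof -
  obtain c where c: "mm c \<noteq> 0" using assms(2) by blast
  have h: "n c * mm c + mm c * n c = 0" by (rule assms(1))
  have "n c * mm c = 0" using h by (simp add: mult.commute)
  then have nc: "n c = 0" using c by simp
  have "n a * mm c = 0" using assms(1)[of a c] nc by simp
  then show ?thesis using c by simp
qed

context RS
begin

lemma ell_Fq: "q \<in> A \<Longrightarrow> F q * pdy a F q = (\<Sum>b\<in>UNIV. gmet F a b q * snd q $ b)"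
proof -
  assume q: "q \<in> A"
  have "pdy a (Fsq F) q = pdy a (\<lambda>q. F q * F q) q" by (simp add: Fsq_eq)
  also have "\<dots> = 2 * (F q * pdy a F q)" using q by (simp add: pd_simps)
  finally show ?thesis using pdyFsq_g[OF q, of a] by simp
qed

lemma ell_eq: "q \<in> A \<Longrightarrow> pdy a F q = (\<Sum>b\<in>UNIV. gmet F a b q * snd q $ b) / F q"
  using ell_Fq Fnz by (simp add: field_simps)

lemma ell_sm: "fsmooth_on A (pdy a F)" by (rule sm_pdy[OF Fsm])
lemma ell_diff[simp]: "q \<in> A \<Longrightarrow> pdy a F differentiable (at q)" using sm_diff_at[OF Aopen ell_sm] .

lemma vd1_F: "q \<in> A \<Longrightarrow> vd1 F q = F q"
proof -
  assume q: "q \<in> A"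
  have "F q * vd1 F q = (\<Sum>a\<in>UNIV. snd q $ a * (F q * pdy a F q))"
    by (simp add: vd1_def sum_distrib_left algebra_simps)
  also have "\<dots> = (F q)^2" using q by (simp add: ell_Fq F2_g sum_2 algebra_simps)
  finally show ?thesis using Fnz[OF q] by (simp add: power2_eq_square)
qed

lemma m_nz: "q \<in> A \<Longrightarrow> m 1 q \<noteq> 0 \<or> m 2 q \<noteq> 0"
proof (rule ccontr)
  assume q: "q \<in> A" and "\<not> (m 1 q \<noteq> 0 \<or> m 2 q \<noteq> 0)"
  then have "m 1 q = 0" "m 2 q = 0" by auto
  then have "det (gmat F q) = 0"
    using frame[OF q] by (simp add: det_2 gmat_def ell_lo_def)
  then show False using detnz[OF q] by simp
qed

lemma my0: "q \<in> A \<Longrightarrow> (\<Sum>l\<in>UNIV. m l q * snd q $ l) = 0"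
proof -
  assume q: "q \<in> A"
  have ly: "(\<Sum>b\<in>UNIV. pdy b F q * snd q $ b) = F q"
    using vd1_F[OF q] by (simp add: vd1_def mult.commute)
  have "eps * m a q * (\<Sum>l\<in>UNIV. m l q * snd q $ l) = 0" for a
  proof -
    have "F q * pdy a F q = (\<Sum>b\<in>UNIV. (pdy a F q * pdy b F q + eps * m a q * m b q) * snd q $ b)"
      using ell_Fq[OF q, of a] frame[OF q] by (simp add: ell_lo_def)
    also have "\<dots> = pdy a F q * (\<Sum>b\<in>UNIV. pdy b F q * snd q $ b) + eps * m a q * (\<Sum>l\<in>UNIV. m l q * snd q $ l)"
      by (simp add: sum_2 algebra_simps)
    finally show ?thesis using ly by simp
  qed
  then have "m a q * (\<Sum>l\<in>UNIV. m l q * snd q $ l) = 0" for a using eps_nz by simp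
  then show ?thesis using m_nz[OF q] by auto
qed

lemma mu_def': "m_up F m k q = (\<Sum>l\<in>UNIV. ginv F k l q * m l q)" by (simp add: m_up_def)

lemma mu_sm: "fsmooth_on A (m_up F m k)"
proof -
  have e: "m_up F m k = (\<lambda>q. \<Sum>l\<in>UNIV. ginv F k l q * m l q)" by (simp add: fun_eq_iff m_up_def)
  show ?thesis unfolding e by (intro sm_sum2 sm_mult h_sm msm Aopen)
qed
lemma mu_diff[simp]: "q \<in> A \<Longrightarrow> m_up F m k differentiable (at q)" using sm_diff_at[OF Aopen mu_sm] .

lemma h_inv3: "q \<in> A \<Longrightarrow> (\<Sum>j\<in>UNIV. ginv F j l q * gmet F j b q) = (if l = b then 1 else 0)"
proof -
  assume q: "q \<in> A"
  have "(\<Sum>j\<in>UNIV. ginv F j l q * gmet F j b q) = (\<Sum>j\<in>UNIV. gmet F b j q * ginv F j l q)"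
    by (rule sum.cong) (auto simp: g_sym[OF q, of b] mult.commute)
  also have "\<dots> = (if l = b then 1 else 0)" using h_inv2[OF q, of b l] by auto
  finally show ?thesis .
qed

lemma G5: "q \<in> A \<Longrightarrow> (\<Sum>j\<in>UNIV. m_up F m j q * pdy j F q) = 0"
proof -
  assume q: "q \<in> A"
  have "F q * (\<Sum>j\<in>UNIV. m_up F m j q * pdy j F q) =
      (\<Sum>j\<in>UNIV. m_up F m j q * (F q * pdy j F q))"
    by (simp add: sum_distrib_left algebra_simps)
  also have "\<dots> = (\<Sum>j\<in>UNIV. (\<Sum>l\<in>UNIV. ginv F j l q * m l q) * (\<Sum>b\<in>UNIV. gmet F j b q * snd q $ b))"
    by (simp add: mu_def' ell_Fq[OF q])
  also have "\<dots> = (\<Sum>l\<in>UNIV. m l q * (\<Sum>b\<in>UNIV. (\<Sum>j\<in>UNIV. ginv F j l q * gmet F j b q) * snd q $ b))"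
    by (simp add: sum_2 algebra_simps)
  also have "\<dots> = (\<Sum>l\<in>UNIV. m l q * snd q $ l)"
    by (simp add: h_inv3[OF q] delta_l')
  also have "\<dots> = 0" by (rule my0[OF q])
  finally show ?thesis using Fnz[OF q] by simp
qed

end


lemma hd_add: "f differentiable (at q) \<Longrightarrow> g differentiable (at q) \<Longrightarrow>
  hdelta F i (\<lambda>q. f q + g q) q = hdelta F i f q + hdelta F i g q"
  by (simp add: hdelta_def pd_simps sum_2 algebra_simps)
lemma hd_diff: "f differentiable (at q) \<Longrightarrow> g differentiable (at q) \<Longrightarrow>
  hdelta F i (\<lambda>q. f q - g q) q = hdelta F i f q - hdelta F i g q"
  by (simp add: hdelta_def pd_simps sum_2 algebra_simps)
lemma hd_mult: "f differentiable (at q) \<Longrightarrow> g differentiable (at q) \<Longrightarrow>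
  hdelta F i (\<lambda>q. f q * g q) q = hdelta F i f q * g q + f q * hdelta F i g q"
  by (simp add: hdelta_def pd_simps sum_2 algebra_simps)
lemma hd_const: "hdelta F i (\<lambda>q. c) q = 0"
  by (simp add: hdelta_def pd_simps)
lemma hd_divide: "f differentiable (at q) \<Longrightarrow> g differentiable (at q) \<Longrightarrow> g q \<noteq> 0 \<Longrightarrow>
  hdelta F i (\<lambda>q. f q / g q) q = (hdelta F i f q * g q - f q * hdelta F i g q) / (g q)^2"
  by (simp add: hdelta_def pd_simps sum_2 field_simps power2_eq_square)
lemma hd_snd: "hdelta F i (\<lambda>q. snd q $ b) q = - nlconn F b i q"
  using exhaust_2[of b] by (auto simp: hdelta_def pd_simps sum_2)

lemma vd1_add: "f differentiable (at q) \<Longrightarrow> g differentiable (at q) \<Longrightarrow>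
  vd1 (\<lambda>q. f q + g q) q = vd1 f q + vd1 g q"
  by (simp add: vd1_def pd_simps sum_2 algebra_simps)
lemma vd1_diff: "f differentiable (at q) \<Longrightarrow> g differentiable (at q) \<Longrightarrow>
  vd1 (\<lambda>q. f q - g q) q = vd1 f q - vd1 g q"
  by (simp add: vd1_def pd_simps sum_2 algebra_simps)
lemma vd1_mult: "f differentiable (at q) \<Longrightarrow> g differentiable (at q) \<Longrightarrow>
  vd1 (\<lambda>q. f q * g q) q = vd1 f q * g q + f q * vd1 g q"
  by (simp add: vd1_def pd_simps sum_2 algebra_simps)
lemma vd1_const: "vd1 (\<lambda>q. c) q = 0"
  by (simp add: vd1_def pd_simps)
lemma vd1_divide: "f differentiable (at q) \<Longrightarrow> g differentiable (at q) \<Longrightarrow> g q \<noteq> 0 \<Longrightarrow>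
  vd1 (\<lambda>q. f q / g q) q = (vd1 f q * g q - f q * vd1 g q) / (g q)^2"
  by (simp add: vd1_def pd_simps sum_2 field_simps power2_eq_square)
lemma vd1_snd: "vd1 (\<lambda>q. snd q $ b) q = snd q $ b"
  using exhaust_2[of b] by (auto simp: vd1_def pd_simps sum_2)


lemmas op_simps = hd_add hd_diff hd_mult hd_const hd_divide hd_snd vd1_add vd1_diff vd1_mult vd1_const vd1_divide vd1_snd

lemma hd_local: "open A \<Longrightarrow> q \<in> A \<Longrightarrow> (\<And>p. p \<in> A \<Longrightarrow> f p = g p) \<Longrightarrow> hdelta F i f q = hdelta F i g q"
  unfolding hdelta_def using pdx_local[of A q f g] pdy_local[of A q f g] by simp
lemma vd1_local: "open A \<Longrightarrow> q \<in> A \<Longrightarrow> (\<And>p. p \<in> A \<Longrightarrow> f p = g p) \<Longrightarrow> vd1 f q = vd1 g q"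
  unfolding vd1_def using pdy_local[of A q f g] by simp
lemma vd2_local: "open A \<Longrightarrow> q \<in> A \<Longrightarrow> (\<And>p. p \<in> A \<Longrightarrow> f p = g p) \<Longrightarrow> vd2 F eps m f q = vd2 F eps m g q"
  unfolding vd2_def using pdy_local[of A q f g] by simp

lemma inv_alg:
  fixes h g G :: "2 \<Rightarrow> 2 \<Rightarrow> real"
  assumes gh: "\<And>e l. (\<Sum>c\<in>UNIV. g e c * h c l) = (if e = l then 1 else 0)"
    and hg: "\<And>k e. (\<Sum>b\<in>UNIV. h k b * g b e) = (if k = e then 1 else 0)"
  shows "(\<Sum>c\<in>UNIV. (\<Sum>b\<in>UNIV. h k b * (\<Sum>e\<in>UNIV. G e b * g e c + G e c * g b e)) * h c l)
     = (\<Sum>b\<in>UNIV. h k b * G l b) + (\<Sum>c\<in>UNIV. G k c * h c l)"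
proof -
  have "(\<Sum>c\<in>UNIV. (\<Sum>b\<in>UNIV. h k b * (\<Sum>e\<in>UNIV. G e b * g e c + G e c * g b e)) * h c l)
     = (\<Sum>b\<in>UNIV. \<Sum>e\<in>UNIV. h k b * G e b * (\<Sum>c\<in>UNIV. g e c * h c l))
       + (\<Sum>c\<in>UNIV. \<Sum>e\<in>UNIV. (\<Sum>b\<in>UNIV. h k b * g b e) * G e c * h c l)"
    by (simp add: sum_2 algebra_simps)
  also have "\<dots> = (\<Sum>b\<in>UNIV. \<Sum>e\<in>UNIV. h k b * G e b * (if e = l then 1 else 0))
       + (\<Sum>c\<in>UNIV. \<Sum>e\<in>UNIV. (if k = e then 1 else 0) * G e c * h c l)"
    by (simp only: gh hg)
  also have "\<dots> = (\<Sum>b\<in>UNIV. h k b * G l b) + (\<Sum>c\<in>UNIV. G k c * h c l)"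
    using exhaust_2[of k] exhaust_2[of l] by (auto simp: sum_2)
  finally show ?thesis .
qed

context RS
begin

lemma hd_g: "q \<in> A \<Longrightarrow> hdelta F i (gmet F a b) q = pdx i (gmet F a b) q"
  by (simp add: hdelta_def)
lemma hd_h: "q \<in> A \<Longrightarrow> hdelta F i (ginv F a b) q = pdx i (ginv F a b) q"
  by (simp add: hdelta_def)
lemma vd1_g: "q \<in> A \<Longrightarrow> vd1 (gmet F a b) q = 0"
  by (simp add: vd1_def)
lemma vd1_h: "q \<in> A \<Longrightarrow> vd1 (ginv F a b) q = 0"
  by (simp add: vd1_def)

lemma hd_F: "q \<in> A \<Longrightarrow> hdelta F i F q = 0"
proof -
  assume q: "q \<in> A"
  have "hdelta F i (Fsq F) q = pdx i (Fsq F) q - (\<Sum>j\<in>UNIV. nlconn F j i q * pdy j (Fsq F) q)"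
    by (simp add: hdelta_def)
  also have "\<dots> = 0"
    using q g_sym[OF q, of 2 1]
    by (simp add: pdxFsq pdyFsq_g compat N_eq sum_2 algebra_simps)
  finally have 0: "hdelta F i (Fsq F) q = 0" .
  have "hdelta F i (Fsq F) q = hdelta F i (\<lambda>q. F q * F q) q" by (simp add: Fsq_eq)
  also have "\<dots> = 2 * F q * hdelta F i F q" using q by (simp add: op_simps)
  finally show ?thesis using 0 Fnz[OF q] by simp
qed

lemma hd_F': "q \<in> A \<Longrightarrow> pdx i F q = (\<Sum>j\<in>UNIV. nlconn F j i q * pdy j F q)"
  using hd_F by (simp add: hdelta_def)

lemma hd_num: "q \<in> A \<Longrightarrow> hdelta F i (\<lambda>q. \<Sum>b\<in>UNIV. gmet F a b q * snd q $ b) q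
   = (\<Sum>c\<in>UNIV. Gm c i a q * (\<Sum>b\<in>UNIV. gmet F c b q * snd q $ b))"
proof -
  assume q: "q \<in> A"
  have "hdelta F i (\<lambda>q. \<Sum>b\<in>UNIV. gmet F a b q * snd q $ b) q
     = (\<Sum>b\<in>UNIV. pdx i (gmet F a b) q * snd q $ b) - (\<Sum>b\<in>UNIV. gmet F a b q * nlconn F b i q)"
    using q by (simp add: sum_2 op_simps hd_g algebra_simps)
  also have "\<dots> = (\<Sum>c\<in>UNIV. Gm c i a q * (\<Sum>b\<in>UNIV. gmet F c b q * snd q $ b))"
    using q by (simp add: compat N_eq sum_2 algebra_simps)
  finally show ?thesis .
qed

lemma hd_ell: "q \<in> A \<Longrightarrow> hdelta F i (pdy a F) q = (\<Sum>c\<in>UNIV. Gm c i a q * pdy c F q)"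
proof -
  assume q: "q \<in> A"
  have "hdelta F i (pdy a F) q = hdelta F i (\<lambda>q. (\<Sum>b\<in>UNIV. gmet F a b q * snd q $ b) / F q) q"
    by (rule hd_local[OF Aopen q]) (simp add: ell_eq)
  also have "\<dots> = hdelta F i (\<lambda>q. \<Sum>b\<in>UNIV. gmet F a b q * snd q $ b) q / F q"
    using q Fnz[OF q] hd_F[OF q]
    by (simp add: op_simps power2_eq_square)
  also have "\<dots> = (\<Sum>c\<in>UNIV. Gm c i a q * pdy c F q)"
    using q Fnz[OF q] by (simp only: hd_num[OF q]) (simp add: ell_eq sum_2 field_simps)
  finally show ?thesis .
qed

lemma vd1_ell: "q \<in> A \<Longrightarrow> vd1 (pdy a F) q = 0"
proof -
  assume q: "q \<in> A"
  have "vd1 (pdy a F) q = vd1 (\<lambda>q. (\<Sum>b\<in>UNIV. gmet F a b q * snd q $ b) / F q) q"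
    by (rule vd1_local[OF Aopen q]) (simp add: ell_eq)
  also have "\<dots> = 0"
    using q Fnz[OF q] vd1_F[OF q]
    by (simp add: op_simps sum_2 vd1_g power2_eq_square)
  finally show ?thesis .
qed

end

context RS
begin

lemma frame_fun: "q \<in> A \<Longrightarrow> gmet F a b q = pdy a F q * pdy b F q + eps * m a q * m b q"
  using frame by (simp add: ell_lo_def)

lemma hd_m: "q \<in> A \<Longrightarrow> hdelta F i (m a) q = (\<Sum>c\<in>UNIV. Gm c i a q * m c q)"
proof -
  assume q: "q \<in> A"
  define hm where "hm a = hdelta F i (m a) q" for a
  define n where "n a = hm a - (\<Sum>c\<in>UNIV. Gm c i a q * m c q)" for a
  have H: "hdelta F i (gmet F a b) q = hdelta F i (pdy a F) q * pdy b F q + pdy a F q * hdelta F i (pdy b F) q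
      + eps * (hm a * m b q + m a q * hm b)" for a b
  proof -
    have "hdelta F i (gmet F a b) q = hdelta F i (\<lambda>q. pdy a F q * pdy b F q + eps * m a q * m b q) q"
      by (rule hd_local[OF Aopen q]) (simp add: frame_fun)
    also have "\<dots> = hdelta F i (pdy a F) q * pdy b F q + pdy a F q * hdelta F i (pdy b F) q
      + eps * (hm a * m b q + m a q * hm b)"
      using q by (simp add: op_simps hm_def algebra_simps)
    finally show ?thesis .
  qed
  have E: "eps * (hm a * m b q + m a q * hm b) = eps * (\<Sum>c\<in>UNIV. Gm c i a q * m c q * m b q + Gm c i b q * m a q * m c q)" for a b
  proof -
    have "eps * (hm a * m b q + m a q * hm b) = hdelta F i (gmet F a b) q - hdelta F i (pdy a F) q * pdy b F q - pdy a F q * hdelta F i (pdy b F) q"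
      using H[of a b] by linarith
    also have "\<dots> = eps * (\<Sum>c\<in>UNIV. Gm c i a q * m c q * m b q + Gm c i b q * m a q * m c q)"
      using q by (simp add: hd_g compat hd_ell frame_fun sum_2 algebra_simps)
    finally show ?thesis .
  qed
  have "n a * m b q + m a q * n b = 0" for a b
  proof -
    have "hm a * m b q + m a q * hm b = (\<Sum>c\<in>UNIV. Gm c i a q * m c q * m b q + Gm c i b q * m a q * m c q)"
      using E[of a b] eps_nz by simp
    then show ?thesis by (simp add: n_def sum_2 algebra_simps)
  qed
  then have "n a = 0" by (rule ttrick) (rule m_nz[OF q])
  then show ?thesis by (simp add: n_def hm_def)
qed

lemma vd1_m: "q \<in> A \<Longrightarrow> vd1 (m a) q = 0"
proof -
  assume q: "q \<in> A"
  have H: "0 = eps * (vd1 (m a) q * m b q + m a q * vd1 (m b) q)" for a b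
  proof -
    have "0 = vd1 (gmet F a b) q" using q by (simp add: vd1_g)
    also have "\<dots> = vd1 (\<lambda>q. pdy a F q * pdy b F q + eps * m a q * m b q) q"
      by (rule vd1_local[OF Aopen q]) (simp add: frame_fun)
    also have "\<dots> = eps * (vd1 (m a) q * m b q + m a q * vd1 (m b) q)"
      using q by (simp add: op_simps vd1_ell algebra_simps)
    finally show ?thesis .
  qed
  have "vd1 (m a) q * m b q + m a q * vd1 (m b) q = 0" for a b using H[of a b] eps_nz by simp
  then show ?thesis by (rule ttrick) (rule m_nz[OF q])
qed

lemma pdx_h: "q \<in> A \<Longrightarrow> pdx i (ginv F k l) q =
   - ((\<Sum>b\<in>UNIV. ginv F k b q * Gm l i b q) + (\<Sum>c\<in>UNIV. Gm k i c q * ginv F c l q))"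
proof -
  assume q: "q \<in> A"
  define P where "P b = pdx i (ginv F k b) q" for b
  have S: "(\<Sum>b\<in>UNIV. P b * gmet F b c q) = - (\<Sum>b\<in>UNIV. ginv F k b q * pdx i (gmet F b c) q)" for c
  proof -
    have "pdx i (\<lambda>q. \<Sum>b\<in>UNIV. ginv F k b q * gmet F b c q) q = pdx i (\<lambda>q. if k = c then 1 else 0) q"
      by (rule pdx_local[OF Aopen q]) (simp add: h_inv1)
    then have "pdx i (\<lambda>q. \<Sum>b\<in>UNIV. ginv F k b q * gmet F b c q) q = 0" by (simp add: pd_simps)
    then show ?thesis using q by (simp add: sum_2 pd_simps P_def algebra_simps)
  qed
  have "P l = (\<Sum>c\<in>UNIV. (\<Sum>b\<in>UNIV. P b * gmet F b c q) * ginv F c l q)"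
    by (simp add: swap_sum h_inv2[OF q] delta_r)
  also have "\<dots> = - (\<Sum>c\<in>UNIV. (\<Sum>b\<in>UNIV. ginv F k b q * pdx i (gmet F b c) q) * ginv F c l q)"
    by (simp add: S sum_negf)
  also have "\<dots> = - (\<Sum>c\<in>UNIV. (\<Sum>b\<in>UNIV. ginv F k b q * (\<Sum>e\<in>UNIV. Gm e i b q * gmet F e c q + Gm e i c q * gmet F b e q)) * ginv F c l q)"
    by (simp add: compat[OF q])
  also have "\<dots> = - ((\<Sum>b\<in>UNIV. ginv F k b q * Gm l i b q) + (\<Sum>c\<in>UNIV. Gm k i c q * ginv F c l q))"
    using inv_alg[where h = "\<lambda>a b. ginv F a b q" and g = "\<lambda>a b. gmet F a b q" and G = "\<lambda>a b. Gm a i b q",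
        OF h_inv2[OF q] h_inv1[OF q]] by simp
  finally show ?thesis by (simp add: P_def)
qed

lemma hd_mu: "q \<in> A \<Longrightarrow> hdelta F i (m_up F m k) q + (\<Sum>j\<in>UNIV. Gm k i j q * m_up F m j q) = 0"
proof -
  assume q: "q \<in> A"
  have "hdelta F i (m_up F m k) q = hdelta F i (\<lambda>q. \<Sum>l\<in>UNIV. ginv F k l q * m l q) q"
    by (simp add: m_up_def[abs_def])
  also have "\<dots> = (\<Sum>l\<in>UNIV. pdx i (ginv F k l) q * m l q + ginv F k l q * hdelta F i (m l) q)"
    using q by (simp add: sum_2 op_simps hd_h)
  finally have 1: "hdelta F i (m_up F m k) q = \<dots>" .
  show ?thesis unfolding 1 using q
    by (simp add: pdx_h hd_m mu_def' sum_2 algebra_simps)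
qed

lemma vd1_mu: "q \<in> A \<Longrightarrow> vd1 (m_up F m k) q = 0"
proof -
  assume q: "q \<in> A"
  have "vd1 (m_up F m k) q = vd1 (\<lambda>q. \<Sum>l\<in>UNIV. ginv F k l q * m l q) q"
    by (simp add: m_up_def[abs_def])
  also have "\<dots> = 0"
    using q by (simp add: sum_2 op_simps vd1_h vd1_m)
  finally show ?thesis .
qed

end

lemma hd_fun: "hdelta F i f = (\<lambda>p. pdx i f p - (\<Sum>j\<in>UNIV. nlconn F j i p * pdy j f p))"
  by (simp add: fun_eq_iff hdelta_def)
lemma vd2_fun: "vd2 F eps m f = (\<lambda>p. eps * F p * (\<Sum>i\<in>UNIV. m_up F m i p * pdy i f p))"
  by (simp add: fun_eq_iff vd2_def)
lemma vd1_fun: "vd1 f = (\<lambda>p. \<Sum>i\<in>UNIV. snd p $ i * pdy i f p)"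
  by (simp add: fun_eq_iff vd1_def)
lemma hd1_fun: "hd1 F f = (\<lambda>p. \<Sum>i\<in>UNIV. ell_up F i p * hdelta F i f p)"
  by (simp add: fun_eq_iff hd1_def)

context RS
begin

lemma hd_sm: "fsmooth_on A f \<Longrightarrow> fsmooth_on A (hdelta F i f)"
  unfolding hd_fun by (intro sm_diff sm_sum2 sm_mult sm_pdx sm_pdy N_sm Aopen)

lemma vd2_sm: "fsmooth_on A f \<Longrightarrow> fsmooth_on A (vd2 F eps m f)"
  unfolding vd2_fun by (intro sm_mult sm_cmult sm_sum2 sm_pdy mu_sm Fsm Aopen)

lemma vd1_sm: "fsmooth_on A f \<Longrightarrow> fsmooth_on A (vd1 f)"
  unfolding vd1_fun by (intro sm_mult sm_sum2 sm_pdy sm_snd Aopen)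

lemma L1: assumes f: "fsmooth_on A f" and q: "q \<in> A"
  shows "hdelta F i (vd2 F eps m f) q = vd2 F eps m (hdelta F i f) q"
proof -
  have d: "\<And>j. pdy j f differentiable (at q)" "\<And>j. pdx j f differentiable (at q)"
    using sm_diff_pd[OF Aopen f q] by auto
  have c1: "pdy j (pdx i f) q = pdx i (pdy j f) q" for j by (rule pdxy_comm[OF Aopen f q])
  have c2: "pdy j (pdy k f) q = pdy k (pdy j f) q" for j k by (rule pdyy_comm[OF Aopen f q])
  have "hdelta F i (vd2 F eps m f) q - vd2 F eps m (hdelta F i f) q
     = eps * F q * (\<Sum>k\<in>UNIV. pdy k f q * (hdelta F i (m_up F m k) q + (\<Sum>j\<in>UNIV. Gm k i j q * m_up F m j q)))"
    unfolding vd2_fun hd_fun using q d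
    by (simp add: pd_simps sum_2 hd_F' pdy_N c1 c2 algebra_simps)
  also have "\<dots> = 0" using q by (simp add: hd_mu)
  finally show ?thesis by simp
qed

lemma L2: assumes f: "fsmooth_on A f" and q: "q \<in> A"
  shows "vd1 (vd2 F eps m f) q = vd2 F eps m (vd1 f) q"
proof -
  have d: "\<And>j. pdy j f differentiable (at q)"
    using sm_diff_pd[OF Aopen f q] by auto
  have c2: "pdy j (pdy k f) q = pdy k (pdy j f) q" for j k by (rule pdyy_comm[OF Aopen f q])
  have v1: "(\<Sum>i\<in>UNIV. snd q $ i * pdy i F q) = F q" using vd1_F[OF q] by (simp add: vd1_def)
  have v2: "(\<Sum>i\<in>UNIV. snd q $ i * pdy i (m_up F m k) q) = 0" for k using vd1_mu[OF q] by (simp add: vd1_def)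
  have v1': "snd q $ 1 * pdy 1 F q + snd q $ 2 * pdy 2 F q = F q" using v1 by (simp add: sum_2)
  have v2': "snd q $ 1 * pdy 1 (m_up F m k) q + snd q $ 2 * pdy 2 (m_up F m k) q = 0" for k
    using v2 by (simp add: sum_2)
  have "vd1 (vd2 F eps m f) q - vd2 F eps m (vd1 f) q =
     eps * (\<Sum>k\<in>UNIV. pdy k f q * m_up F m k q) * ((\<Sum>i\<in>UNIV. snd q $ i * pdy i F q) - F q)
     + eps * F q * (\<Sum>k\<in>UNIV. pdy k f q * (\<Sum>i\<in>UNIV. snd q $ i * pdy i (m_up F m k) q))"
    unfolding vd2_fun vd1_fun using q d
    by (simp add: pd_simps sum_2 c2 algebra_simps)
  also have "\<dots> = 0" by (simp add: v1 v2)
  finally show ?thesis by simp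
qed

lemma L3: assumes f: "fsmooth_on A f" and q: "q \<in> A"
  shows "vd2 F eps m (hd1 F f) q = hd2 F eps m f q + hd1 F (vd2 F eps m f) q"
proof -
  have dh: "\<And>i. hdelta F i f differentiable (at q)" using sm_diff_at[OF Aopen hd_sm[OF f] q] .
  define V where "V i = hdelta F i (vd2 F eps m f) q" for i
  have L1i: "eps * F q * (\<Sum>j\<in>UNIV. m_up F m j q * pdy j (hdelta F i f) q) = V i" for i
    using L1[OF f q, of i] by (simp add: V_def vd2_def)
  have G5': "(\<Sum>j\<in>UNIV. m_up F m j q * pdy j F q) = 0" by (rule G5[OF q])
  have Fn: "F q \<noteq> 0" by (rule Fnz[OF q])
  have "vd2 F eps m (hd1 F f) q =
     eps * (\<Sum>i\<in>UNIV. m_up F m i q * hdelta F i f q)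
     - eps * (\<Sum>i\<in>UNIV. snd q $ i * hdelta F i f q) * (\<Sum>j\<in>UNIV. m_up F m j q * pdy j F q) / F q
     + (\<Sum>i\<in>UNIV. snd q $ i / F q * (eps * F q * (\<Sum>j\<in>UNIV. m_up F m j q * pdy j (hdelta F i f) q)))"
    unfolding vd2_def hd1_fun ell_up_def using q dh Fn
    by (simp add: pd_simps sum_2 field_simps power2_eq_square)
  also have "\<dots> = hd2 F eps m f q + hd1 F (vd2 F eps m f) q"
    by (simp only: L1i G5') (simp add: hd2_def hd1_def ell_up_def V_def sum_distrib_left)
  finally show ?thesis .
qed

end

lemma pdy_ln_abs: "f differentiable (at p) \<Longrightarrow> f p \<noteq> 0 \<Longrightarrow> pdy i (\<lambda>q. ln \<bar>f q\<bar>) p = pdy i f p / f p"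
  unfolding pdy_eq by (rule ddir_ln_abs)

lemma sqrt_differentiable: "(y::real) > 0 \<Longrightarrow> sqrt differentiable (at y)"
  unfolding differentiable_def using has_field_derivative_imp_has_derivative[OF DERIV_real_sqrt] by blast

definition Phi :: "real \<Rightarrow> real \<times> real \<times> real \<Rightarrow> real" where
  "Phi e z = sqrt (e * (1 / (fst (snd z) + fst z * fst z + e))) *
     (2 * e * fst z + e / 2 * (snd (snd z) + 2 * fst z * fst (snd z)) / (fst (snd z) + fst z * fst z + e))"

lemma Phi_diff:
  assumes "fst (snd z) + fst z * fst z + e \<noteq> 0" "e * (1 / (fst (snd z) + fst z * fst z + e)) > 0"
  shows "Phi e differentiable (at z)"
proof -
  have b1: "(\<lambda>z::real\<times>real\<times>real. fst z) differentiable (at z)"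
    by (rule bounded_linear_imp_differentiable[OF bounded_linear_fst])
  have b2: "(\<lambda>z::real\<times>real\<times>real. fst (snd z)) differentiable (at z)"
    by (rule bounded_linear_imp_differentiable[OF bounded_linear_compose[OF bounded_linear_fst bounded_linear_snd]])
  have b3: "(\<lambda>z::real\<times>real\<times>real. snd (snd z)) differentiable (at z)"
    by (rule bounded_linear_imp_differentiable[OF bounded_linear_compose[OF bounded_linear_snd bounded_linear_snd]])
  have k: "(\<lambda>z::real\<times>real\<times>real. e * (1 / (fst (snd z) + fst z * fst z + e))) differentiable (at z)"
    using b1 b2 assms(1) by (auto intro!: differentiable_mult differentiable_divide differentiable_add)
  have s: "(\<lambda>z::real\<times>real\<times>real. sqrt (e * (1 / (fst (snd z) + fst z * fst z + e)))) differentiable (at z)"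
    by (rule differentiable_compose[OF _ k]) (use sqrt_differentiable assms(2) in simp)
  have r: "(\<lambda>z::real\<times>real\<times>real. 2 * e * fst z + e / 2 * (snd (snd z) + 2 * fst z * fst (snd z)) / (fst (snd z) + fst z * fst z + e)) differentiable (at z)"
    using b1 b2 b3 assms(1) by (auto intro!: differentiable_mult differentiable_divide differentiable_add)
  show ?thesis unfolding Phi_def[abs_def] by (rule differentiable_mult[OF s r])
qed

locale RSC = RS +
  fixes phi :: "pt \<Rightarrow> real"
  assumes CF: "conf_factor A F eps m phi"
    and HC: "horiz_const A F (vd2 F eps m phi)"
begin

lemma phi_sm: "fsmooth_on A phi" using CF by (simp add: conf_factor_def)
lemma phi_hom: "homog 0 A phi" using CF by (simp add: conf_factor_def)
lemma rho_pos: "q \<in> A \<Longrightarrow> eps * cc_rho F eps m phi q > 0" using CF by (simp add: conf_factor_def)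

definition psi where "psi = vd2 F eps m phi"
definition uu where "uu = vd2 F eps m psi"
definition ww where "ww = vd2 F eps m uu"

lemma psi_sm: "fsmooth_on A psi" unfolding psi_def by (intro vd2_sm phi_sm)
lemma uu_sm: "fsmooth_on A uu" unfolding uu_def by (intro vd2_sm psi_sm)
lemma ww_sm: "fsmooth_on A ww" unfolding ww_def by (intro vd2_sm uu_sm)
lemma psi_diff[simp]: "q \<in> A \<Longrightarrow> psi differentiable (at q)" using sm_diff_at[OF Aopen psi_sm] .
lemma uu_diff[simp]: "q \<in> A \<Longrightarrow> uu differentiable (at q)" using sm_diff_at[OF Aopen uu_sm] .
lemma ww_diff[simp]: "q \<in> A \<Longrightarrow> ww differentiable (at q)" using sm_diff_at[OF Aopen ww_sm] .

lemma vd2_zero: "q \<in> A \<Longrightarrow> (\<And>p. p \<in> A \<Longrightarrow> f p = 0) \<Longrightarrow> vd2 F eps m f q = 0"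
proof -
  assume q: "q \<in> A" and z: "\<And>p. p \<in> A \<Longrightarrow> f p = 0"
  have "vd2 F eps m f q = vd2 F eps m (\<lambda>p. 0) q" by (rule vd2_local[OF Aopen q]) (use z in auto)
  then show ?thesis by (simp add: vd2_def pd_simps)
qed

lemma hd_psi: "q \<in> A \<Longrightarrow> hdelta F i psi q = 0"
  using HC by (simp add: horiz_const_def psi_def)
lemma hd_uu: "q \<in> A \<Longrightarrow> hdelta F i uu q = 0"
  unfolding uu_def using L1[OF psi_sm] vd2_zero hd_psi by simp
lemma hd_ww: "q \<in> A \<Longrightarrow> hdelta F i ww q = 0"
  unfolding ww_def using L1[OF uu_sm] vd2_zero hd_uu by simp

lemma vd1_phi: "q \<in> A \<Longrightarrow> vd1 phi q = 0"
proof -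
  assume q: "q \<in> A"
  obtain x y where xy: "q = (x, y)" by (cases q)
  have d: "phi differentiable (at q)" using sm_diff_at[OF Aopen phi_sm q] .
  have dec: "(0::real^2, y) = y $ 1 *\<^sub>R (0, axis 1 1) + y $ 2 *\<^sub>R (0, axis 2 1)"
    by (simp add: vec_eq_iff axis_def forall_2)
  have "vd1 phi q = y$1 * ddir (0, axis 1 1) phi q + y$2 * ddir (0, axis 2 1) phi q"
    by (simp add: vd1_def sum_2 pdy_eq xy)
  also have "\<dots> = ddir (y$1 *\<^sub>R (0, axis 1 1) + y$2 *\<^sub>R (0, axis 2 1)) phi q"
    by (simp only: ddir_linear_dir[OF d])
  also have "\<dots> = ddir (0, y) phi q" by (simp only: dec[symmetric])
  also have "\<dots> = deriv (\<lambda>t. phi (x, y)) 0"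
    unfolding ddir_def
  proof (rule deriv_cong_ev)
    have "eventually (\<lambda>t::real. t \<in> {-1<..}) (nhds 0)" by (rule eventually_nhds_in_open) auto
    then have "eventually (\<lambda>t::real. t > -1) (nhds 0)" by simp
    then show "\<forall>\<^sub>F t in nhds 0. phi (q + t *\<^sub>R (0, y)) = phi (x, y)"
    proof eventually_elim
      case (elim t)
      have "q + t *\<^sub>R (0, y) = (x, (1 + t) *\<^sub>R y)" by (simp add: xy algebra_simps)
      moreover have "(1 + t) > 0" using elim by simp
      ultimately show ?case using phi_hom q xy by (simp add: homog_def)
    qed
  qed simp
  also have "\<dots> = 0" by simp
  finally show ?thesis .
qed

lemma vd1_psi: "q \<in> A \<Longrightarrow> vd1 psi q = 0"
  unfolding psi_def using L2[OF phi_sm] vd2_zero vd1_phi by simp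
lemma vd1_uu: "q \<in> A \<Longrightarrow> vd1 uu q = 0"
  unfolding uu_def using L2[OF psi_sm] vd2_zero vd1_psi by simp
lemma vd1_ww: "q \<in> A \<Longrightarrow> vd1 ww q = 0"
  unfolding ww_def using L2[OF uu_sm] vd2_zero vd1_uu by simp

lemma hd1_psi: "q \<in> A \<Longrightarrow> hd1 F psi q = 0"
  by (simp add: hd1_def hd_psi)

lemma Q_term: "q \<in> A \<Longrightarrow> vd2 F eps m (hd1 F phi) q = hd2 F eps m phi q"
  using L3[OF phi_sm, of q] hd1_psi by (simp add: psi_def)

lemma main_scalar_zero: "q \<in> A \<Longrightarrow> main_scalar F m q = 0"
proof -
  assume q: "q \<in> A"
  have c: "cartan F i j k q = 0" for i j k
  proof -
    have "pdy j (pdy k (Fsq F)) = (\<lambda>p. 2 * gmet F j k p)" by (simp add: fun_eq_iff gmet_def)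
    then have "cartan F i j k q = 1/4 * pdy i (\<lambda>p. 2 * gmet F j k p) q" by (simp add: cartan_def)
    also have "\<dots> = 0" using q by (simp add: pd_simps)
    finally show ?thesis .
  qed
  obtain a where a: "m a q \<noteq> 0" using m_nz[OF q] by blast
  show ?thesis unfolding main_scalar_def
  proof (rule the_equality)
    show "\<forall>i j k. F q * cartan F i j k q = 0 * m i q * m j q * m k q" by (simp add: c)
    fix c assume "\<forall>i j k. F q * cartan F i j k q = c * m i q * m j q * m k q"
    then have "F q * cartan F a a a q = c * m a q * m a q * m a q" by blast
    then have "c * m a q * m a q * m a q = 0" by (simp add: c)
    then show "c = 0" using a by simp
  qed
qed

definition DD where "DD q = uu q + psi q * psi q + eps" for q

lemma rho_eq: "q \<in> A \<Longrightarrow> cc_rho F eps m phi q = 1 / DD q"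
  by (simp add: cc_rho_def cc_sigma_def main_scalar_zero DD_def psi_def[symmetric] uu_def[symmetric] power2_eq_square)

lemma DD_nz: "q \<in> A \<Longrightarrow> DD q \<noteq> 0"
  using rho_pos[of q] rho_eq[of q] by auto

lemma DD_diff[simp]: "q \<in> A \<Longrightarrow> DD differentiable (at q)"
  unfolding DD_def[abs_def] by simp

lemma vd2_lnrho: "q \<in> A \<Longrightarrow> vd2 F eps m (\<lambda>q. ln \<bar>cc_rho F eps m phi q\<bar>) q = - (ww q + 2 * psi q * uu q) / DD q"
proof -
  assume q: "q \<in> A"
  have "vd2 F eps m (\<lambda>q. ln \<bar>cc_rho F eps m phi q\<bar>) q = vd2 F eps m (\<lambda>q. - ln \<bar>DD q\<bar>) q"
    by (rule vd2_local[OF Aopen q]) (simp add: rho_eq DD_nz ln_div)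
  also have "\<dots> = eps * F q * (\<Sum>i\<in>UNIV. m_up F m i q * (- (pdy i uu q + 2 * psi q * pdy i psi q) / DD q))"
  proof -
    have "pdy i (\<lambda>q. - ln \<bar>DD q\<bar>) q = - (pdy i uu q + 2 * psi q * pdy i psi q) / DD q" for i
    proof -
      have dl: "(\<lambda>q. ln \<bar>DD q\<bar>) differentiable (at q)"
      proof -
        have "(\<lambda>y. ln \<bar>y\<bar>) differentiable (at (DD q))"
          unfolding differentiable_def
          using has_field_derivative_imp_has_derivative[OF DERIV_ln_abs_real[OF DD_nz[OF q]]] by blast
        from differentiable_compose[OF this DD_diff[OF q]] show ?thesis .
      qed
      have "pdy i (\<lambda>q. - ln \<bar>DD q\<bar>) q = - (pdy i DD q / DD q)"
        using dl q DD_nz[OF q] by (simp add: pd_simps pdy_ln_abs)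
      moreover have "pdy i DD q = pdy i uu q + 2 * psi q * pdy i psi q"
        unfolding DD_def[abs_def] using q by (simp add: pd_simps)
      ultimately show ?thesis using DD_nz[OF q] by (simp add: field_simps)
    qed
    then show ?thesis by (simp add: vd2_def)
  qed
  also have "\<dots> = - (ww q + 2 * psi q * uu q) / DD q"
    using DD_nz[OF q] by (simp add: ww_def uu_def vd2_def sum_2 field_simps)
  finally show ?thesis .
qed

lemma Ibar_eq: "q \<in> A \<Longrightarrow> cc_Ibar F eps m phi q = Phi eps (psi q, uu q, ww q)"
proof -
  assume q: "q \<in> A"
  have 1: "Phi eps (psi q, uu q, ww q) = sqrt (eps * (1 / DD q)) * (2 * eps * psi q + eps / 2 * (ww q + 2 * psi q * uu q) / DD q)"
    by (simp add: Phi_def DD_def)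
  have 2: "cc_Ibar F eps m phi q = sqrt (eps * (1 / DD q)) * (0 + 2 * eps * psi q - eps / 2 * (- (ww q + 2 * psi q * uu q) / DD q))"
    using q by (simp add: cc_Ibar_def rho_eq main_scalar_zero vd2_lnrho psi_def[symmetric])
  show ?thesis unfolding 1 2 using DD_nz[OF q] by (simp add: field_simps)
qed

end

context RSC
begin

definition HH where "HH q = Phi eps (psi q, uu q, ww q)" for q

lemma HH_chain:
  assumes p: "p \<in> A"
  obtains L where "bounded_linear L"
    "\<And>v. ddir v HH p = L (ddir v psi p, ddir v uu p, ddir v ww p)"
proof -
  have D: "fst (snd (psi p, uu p, ww p)) + fst (psi p, uu p, ww p) * fst (psi p, uu p, ww p) + eps \<noteq> 0"
    using DD_nz[OF p] by (simp add: DD_def)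
  have P: "eps * (1 / (fst (snd (psi p, uu p, ww p)) + fst (psi p, uu p, ww p) * fst (psi p, uu p, ww p) + eps)) > 0"
    using rho_pos[OF p] rho_eq[OF p] by (simp add: DD_def)
  obtain L where L: "(Phi eps has_derivative L) (at (psi p, uu p, ww p))"
    using Phi_diff[OF D P] unfolding differentiable_def by blast
  have "ddir v HH p = L (ddir v psi p, ddir v uu p, ddir v ww p)" for v
    unfolding HH_def[abs_def] by (rule ddir_chain3(1)[OF psi_diff[OF p] uu_diff[OF p] ww_diff[OF p] L])
  then show ?thesis using that has_derivative_bounded_linear[OF L] by blast
qed

lemma HH_diff: "p \<in> A \<Longrightarrow> HH differentiable (at p)"
proof -
  assume p: "p \<in> A"
  have D: "fst (snd (psi p, uu p, ww p)) + fst (psi p, uu p, ww p) * fst (psi p, uu p, ww p) + eps \<noteq> 0"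
    using DD_nz[OF p] by (simp add: DD_def)
  have P: "eps * (1 / (fst (snd (psi p, uu p, ww p)) + fst (psi p, uu p, ww p) * fst (psi p, uu p, ww p) + eps)) > 0"
    using rho_pos[OF p] rho_eq[OF p] by (simp add: DD_def)
  obtain L where L: "(Phi eps has_derivative L) (at (psi p, uu p, ww p))"
    using Phi_diff[OF D P] unfolding differentiable_def by blast
  show ?thesis unfolding HH_def[abs_def] by (rule ddir_chain3(2)[OF psi_diff[OF p] uu_diff[OF p] ww_diff[OF p] L])
qed

lemma HH_hd_vd1:
  assumes p: "p \<in> A"
  shows "pdx i HH p = (\<Sum>j\<in>UNIV. nlconn F j i p * pdy j HH p)" "(\<Sum>i\<in>UNIV. snd p $ i * pdy i HH p) = 0"
proof -
  obtain L where bl: "bounded_linear L" and ch: "\<And>v. ddir v HH p = L (ddir v psi p, ddir v uu p, ddir v ww p)"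
    using HH_chain[OF p] by blast
  interpret L: bounded_linear L by (rule bl)
  have px: "pdx k f p = ddir (axis k 1, 0) f p" and py: "pdy k f p = ddir (0, axis k 1) f p" for k f
    by (simp_all add: pdx_ddir pdy_ddir)
  define X where "X k = (pdx k psi p, pdx k uu p, pdx k ww p)" for k
  define Y where "Y k = (pdy k psi p, pdy k uu p, pdy k ww p)" for k
  have hx: "pdx k HH p = L (X k)" for k by (simp add: px ch X_def)
  have hy: "pdy k HH p = L (Y k)" for k by (simp add: py ch Y_def)
  have "X i - (nlconn F 1 i p *\<^sub>R Y 1 + nlconn F 2 i p *\<^sub>R Y 2) = (hdelta F i psi p, hdelta F i uu p, hdelta F i ww p)"
    by (simp add: X_def Y_def hdelta_def sum_2)
  also have "\<dots> = 0" using p by (simp add: hd_psi hd_uu hd_ww zero_prod_def)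
  finally have "L (X i - (nlconn F 1 i p *\<^sub>R Y 1 + nlconn F 2 i p *\<^sub>R Y 2)) = 0" by simp
  then show "pdx i HH p = (\<Sum>j\<in>UNIV. nlconn F j i p * pdy j HH p)"
    by (simp add: hx hy sum_2 L.diff L.add L.scaleR)
  have "snd p $ 1 *\<^sub>R Y 1 + snd p $ 2 *\<^sub>R Y 2 = (vd1 psi p, vd1 uu p, vd1 ww p)"
    by (simp add: Y_def vd1_def sum_2)
  also have "\<dots> = 0" using p by (simp add: vd1_psi vd1_uu vd1_ww zero_prod_def)
  finally have "L (snd p $ 1 *\<^sub>R Y 1 + snd p $ 2 *\<^sub>R Y 2) = 0" by simp
  then show "(\<Sum>i\<in>UNIV. snd p $ i * pdy i HH p) = 0"
    by (simp add: hy sum_2 L.add L.scaleR)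
qed

lemma S_formula:
  assumes p: "p \<in> A"
  shows "cc_S F eps m phi (cc_Ibar F eps m phi) p =
    - cc_rho F eps m phi p * F p * (psi p * hd1 F phi p - hd2 F eps m phi p) * vd2 F eps m (cc_Ibar F eps m phi) p"
proof -
  have lx: "pdx i (cc_Ibar F eps m phi) p = pdx i HH p" for i
    by (rule pdx_local[OF Aopen p]) (simp add: Ibar_eq HH_def)
  have ly: "pdy i (cc_Ibar F eps m phi) p = pdy i HH p" for i
    by (rule pdy_local[OF Aopen p]) (simp add: Ibar_eq HH_def)
  have v2: "vd2 F eps m (cc_Ibar F eps m phi) p = eps * F p * (\<Sum>i\<in>UNIV. m_up F m i p * pdy i HH p)"
    by (simp add: vd2_def ly)
  have hx: "pdx i HH p = (\<Sum>j\<in>UNIV. nlconn F j i p * pdy j HH p)" for i using HH_hd_vd1(1)[OF p] .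
  have v1: "(\<Sum>i\<in>UNIV. snd p $ i * pdy i HH p) = 0" using HH_hd_vd1(2)[OF p] .
  have g6: "(\<Sum>i\<in>UNIV. snd p $ i * nlconn F j i p) = 2 * spray F j p" for j using G6[OF p] .
  have Q: "cc_Q F eps m phi p = 1/2 * (eps * cc_rho F eps m phi p * (F p)\<^sup>2 * (psi p * hd1 F phi p - hd2 F eps m phi p))"
    using Q_term[OF p] by (simp add: cc_Q_def psi_def[symmetric] algebra_simps)
  have Fn: "F p \<noteq> 0" by (rule Fnz[OF p])
  have v1': "snd p $ 1 * pdy 1 HH p + snd p $ 2 * pdy 2 HH p = 0" using v1 by (simp add: sum_2)
  have g6': "snd p $ 1 * nlconn F j 1 p + snd p $ 2 * nlconn F j 2 p = 2 * spray F j p" for j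
    using g6[of j] by (simp add: sum_2)
  have "cc_S F eps m phi (cc_Ibar F eps m phi) p =
     (\<Sum>j\<in>UNIV. pdy j HH p * ((\<Sum>i\<in>UNIV. snd p $ i * nlconn F j i p) - 2 * spray F j p))
     - 2 * cc_Q F eps m phi p * (\<Sum>i\<in>UNIV. m_up F m i p * pdy i HH p)
     - 2 * cc_P F eps m phi p / F p * (\<Sum>i\<in>UNIV. snd p $ i * pdy i HH p)"
    using Fn by (simp add: cc_S_def lx ly hx cc_spray_def ell_up_def sum_2 field_simps)
  also have "\<dots> = - 2 * cc_Q F eps m phi p * (\<Sum>i\<in>UNIV. m_up F m i p * pdy i HH p)"
    by (simp add: g6 v1)
  also have "\<dots> = - cc_rho F eps m phi p * F p * (psi p * hd1 F phi p - hd2 F eps m phi p) * vd2 F eps m (cc_Ibar F eps m phi) p"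
    by (simp add: Q v2 power2_eq_square algebra_simps)
  finally show ?thesis .
qed

lemma main:
  "landsberg_cc A F eps m phi \<longleftrightarrow>
    (\<forall>p\<in>A. vd2 F eps m (cc_Ibar F eps m phi) p = 0 \<or>
            vd2 F eps m phi p * hd1 F phi p = hd2 F eps m phi p)"
proof -
  have "cc_S F eps m phi (cc_Ibar F eps m phi) p = 0 \<longleftrightarrow>
     (vd2 F eps m (cc_Ibar F eps m phi) p = 0 \<or> vd2 F eps m phi p * hd1 F phi p = hd2 F eps m phi p)"
    if p: "p \<in> A" for p
  proof -
    have r: "cc_rho F eps m phi p \<noteq> 0" using rho_pos[OF p] by auto
    show ?thesis using r Fnz[OF p] unfolding S_formula[OF p] psi_def by auto
  qed
  then show ?thesis unfolding landsberg_cc_def by blast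
qed

end

theorem proposition4p7:
  fixes A :: "pt set" and F phi :: "pt \<Rightarrow> real" and eps :: real and m :: "2 \<Rightarrow> pt \<Rightarrow> real"
  assumes "pseudo_riemannian A F"
    and "berwald_frame A F eps m"
    and "conf_factor A F eps m phi"
    and "horiz_const A F (vd2 F eps m phi)"
  shows "landsberg_cc A F eps m phi \<longleftrightarrow>
    (\<forall>p\<in>A. vd2 F eps m (cc_Ibar F eps m phi) p = 0 \<or>
            vd2 F eps m phi p * hd1 F phi p = hd2 F eps m phi p)"
proof -
  interpret RSC A F eps m phi by unfold_locales (fact assms)+
  show ?thesis by (rule main)
qed

end
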